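(* Let $m,p\ge1$, let $a_1,\dots,a_{2m}$ and $b_1,\dots,b_{2p}$ be positive integers, and let $$r=[2a_1,2a_2,\dots,2a_{2m},2b_1,-2b_2,2b_3,-2b_4,\dots,-2b_{2p}]$$ or $r=[2b_1,-2b_2,2b_3,\dots,-2b_{2p},2a_1,2a_2,\dots,2a_{2m}]$. Then every zero of $\Delta_{K(r)}(t)$ is real or has modulus $1$; counted with multiplicity, exactly $2p$ zeros are real and exactly $2m$ zeros are non-real of modulus $1$.
   Context: For a finite sequence $r=[2a_1,2a_2,\dots,2a_n]$ of nonzero even integers, $K(r)$ denotes the 2-bridge knot or link whose associated rational number has the even continued fraction expansion $1/(2a_1-1/(2a_2-\cdots-1/(2a_n)))$. Let $M(r)$ be the $n\times n$ integer matrix whose $(k,k)$-entry is $a_k$, whose $(k,k+1)$-entry is $1$ ($1\le k\le n-1$), and whose other entries are $0$; $\Delta_{K(r)}(t)=\det(tM(r)-M(r)^T)$ is the (reduced) Alexander polynomial of $K(r)$ (up to sign). *)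

theory Defs
  imports "Jordan_Normal_Form.Determinant" "HOL-Computational_Algebra.Polynomial" Complex_Main
begin

text \<open>An even continued fraction sequence r = [2a_1,...,2a_n] is represented as the
  integer list of its (even) entries. M(r) has diagonal entries a_k = r_k / 2 and
  1 on the superdiagonal (0-indexed).\<close>

definition seifert_M :: "int list \<Rightarrow> int mat" where
  "seifert_M r = mat (length r) (length r)
     (\<lambda>(i, j). if i = j then (r ! i) div 2 else if j = i + 1 then 1 else 0)"

definition alexander_poly :: "int list \<Rightarrow> int poly" where
  "alexander_poly r = det (mat (length r) (length r)
     (\<lambda>(i, j). [:0, seifert_M r $$ (i, j):] - [:seifert_M r $$ (j, i):]))"

end

theory Submission
  imports Defs "Jordan_Normal_Form.Char_Poly" "HOL-Computational_Algebra.Polynomial"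
begin

definition stp :: "'a::comm_ring_1 \<Rightarrow> 'a \<Rightarrow> 'a \<Rightarrow> 'a \<times> 'a \<Rightarrow> 'a \<times> 'a" where
  "stp al be y s = (fst s + be * y * (snd s + al * fst s), snd s + al * fst s)"

fun FG :: "(nat \<Rightarrow> 'a::comm_ring_1) \<Rightarrow> (nat \<Rightarrow> 'a) \<Rightarrow> 'a \<Rightarrow> 'a \<times> 'a \<Rightarrow> nat \<Rightarrow> 'a \<times> 'a" where
  "FG al be y s 0 = s"
| "FG al be y s (Suc j) = stp (al j) (be j) y (FG al be y s j)"

definition pstp :: "real \<Rightarrow> real \<Rightarrow> real poly \<times> real poly \<Rightarrow> real poly \<times> real poly" where
  "pstp al be s = (fst s + smult be (pCons 0 (snd s + smult al (fst s))), snd s + smult al (fst s))"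

fun fgp :: "(nat \<Rightarrow> real) \<Rightarrow> (nat \<Rightarrow> real) \<Rightarrow> nat \<Rightarrow> real poly \<times> real poly" where
  "fgp al be 0 = (1, 0)"
| "fgp al be (Suc j) = pstp (al j) (be j) (fgp al be j)"

lemma fgp_eval:
  "poly (fst (fgp al be j)) y = fst (FG al be y (1,0) j) \<and> poly (snd (fgp al be j)) y = snd (FG al be y (1,0) j)"
  by (induction j) (auto simp: stp_def pstp_def algebra_simps)

lemma FG_zero: "fst (FG al be 0 (1,0) j) = (1::real)"
  by (induction j) (auto simp: stp_def)

lemma sign_const:
  fixes h :: "real poly"
  assumes "a \<le> b" "\<And>x. a \<le> x \<Longrightarrow> x \<le> b \<Longrightarrow> poly h x \<noteq> 0"
  shows "poly h a * poly h b > 0"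
proof (cases "a = b")
  case True thus ?thesis using assms(2)[of a] by (auto simp: zero_less_mult_iff linorder_neq_iff)
next
  case False
  hence ab: "a < b" using assms(1) by simp
  have ha: "poly h a \<noteq> 0" "poly h b \<noteq> 0" using assms by auto
  show ?thesis
  proof (rule ccontr)
    assume "\<not> ?thesis"
    hence "poly h a * poly h b < 0" using ha by (simp add: not_less order.order_iff_strict)
    then obtain x where "x > a" "x < b" "poly h x = 0" using poly_IVT[OF ab] by blast
    thus False using assms(2)[of x] by simp
  qed
qed

lemma sign_inf:
  fixes h :: "real poly" and s :: real
  assumes "s * lead_coeff h > 0"
  shows "\<exists>R. \<forall>x\<ge>R. s * poly h x > 0"
proof -
  have "s \<noteq> 0" using assms by auto
  hence "lead_coeff (smult s h) > 0" using assms by simp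
  from poly_pinfty_gt_lc[OF this] obtain n where "\<forall>x\<ge>n. poly (smult s h) x \<ge> lead_coeff (smult s h)" by blast
  thus ?thesis using assms \<open>s \<noteq> 0\<close> by (intro exI[of _ n]) (auto intro: less_le_trans)
qed

lemma step_mono:
  fixes q :: "nat \<Rightarrow> real"
  assumes "\<forall>i<n. q i < q (Suc i)" "i < j" "j \<le> n"
  shows "q i < q j"
  using assms(2,3)
proof (induction j)
  case 0 thus ?case by simp
next
  case (Suc j)
  show ?case
  proof (cases "i = j")
    case True thus ?thesis using assms(1) Suc by auto
  next
    case False
    hence "q i < q j" using Suc by auto
    thus ?thesis using assms(1) Suc by (meson Suc_le_lessD less_trans)
  qed
qed

lemma neg1_pow_prod_neg:
  fixes A B :: real
  assumes "(-1)^i * A > 0" "(-1)^(Suc i) * B > 0"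
  shows "A * B < 0"
proof (cases "even i")
  case True thus ?thesis using assms by (simp add: mult_pos_neg)
next
  case False thus ?thesis using assms by (simp add: mult_neg_pos)
qed

lemma sign_transfer:
  fixes A B :: real
  assumes "A * B > 0" "(-1)^c * B > 0"
  shows "(-1)^c * A > 0"
  using assms by (cases "even c") (auto simp: zero_less_mult_iff)

lemma roots_from_samples:
  fixes h :: "real poly" and q :: "nat \<Rightarrow> real" and n :: nat
  assumes h0: "h \<noteq> 0" and deg: "degree h \<le> n"
    and qmono: "\<forall>i<n. q i < q (Suc i)"
    and qsign: "\<forall>i\<le>n. (-1)^i * poly h (q i) > 0"
  shows "\<exists>w. (\<forall>i<n. q i < w i \<and> w i < q (Suc i) \<and> poly h (w i) = 0)
           \<and> (\<forall>y. poly h y = 0 \<longrightarrow> (\<exists>i<n. y = w i))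
           \<and> (\<forall>y c. c \<le> n \<longrightarrow> (c = 0 \<or> w (c-1) < y) \<longrightarrow> (c = n \<or> y < w c) \<longrightarrow> (-1)^c * poly h y > 0)"
proof -
  have "\<forall>i. \<exists>x. i < n \<longrightarrow> q i < x \<and> x < q (Suc i) \<and> poly h x = 0"
  proof
    fix i
    show "\<exists>x. i < n \<longrightarrow> q i < x \<and> x < q (Suc i) \<and> poly h x = 0"
    proof (cases "i < n")
      case True
      have "poly h (q i) * poly h (q (Suc i)) < 0"
      proof (rule neg1_pow_prod_neg[of i])
        show "(-1)^i * poly h (q i) > 0" using qsign True by auto
        show "(-1)^(Suc i) * poly h (q (Suc i)) > 0" using qsign True by (metis Suc_leI)
      qed
      from poly_IVT[OF _ this] qmono True show ?thesis by blast
    qed auto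
  qed
  then obtain w where w: "\<forall>i. i < n \<longrightarrow> q i < w i \<and> w i < q (Suc i) \<and> poly h (w i) = 0"
    by (metis choice)
  have wmono: "w i < w j" if "i < j" "j < n" for i j
  proof -
    have "w i < q (Suc i)" using w that by auto
    also have "q (Suc i) \<le> q j"
      using step_mono[OF qmono, of "Suc i" j] that by (cases "Suc i = j") auto
    also have "q j < w j" using w that by auto
    finally show ?thesis .
  qed
  have wle: "w i \<le> w j" if "i \<le> j" "j < n" for i j
    using wmono[of i j] that by (cases "i = j") auto
  have allroots: "\<exists>i<n. y = w i" if "poly h y = 0" for y
  proof -
    let ?W = "w ` {..<n}" and ?R = "{x. poly h x = 0}"
    have fin: "finite ?R" using poly_roots_finite[OF h0] .
    have sub: "?W \<subseteq> ?R" using w by auto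
    have inj: "inj_on w {..<n}"
      by (rule inj_onI) (metis lessThan_iff linorder_neqE_nat wmono order_less_irrefl)
    have "card ?W = n" using card_image[OF inj] by simp
    moreover have "card ?R \<le> n" using card_poly_roots_bound[OF h0] deg by linarith
    ultimately have "?W = ?R" using card_subset_eq[OF fin sub] card_mono[OF fin sub] by linarith
    thus ?thesis using that by auto
  qed
  have signs: "(-1)^c * poly h y > 0"
    if c: "c \<le> n" and lo: "c = 0 \<or> w (c-1) < y" and hi: "c = n \<or> y < w c" for y c
  proof -
    have qlo: "c = 0 \<or> w (c-1) < q c" using w c by (cases c) auto
    have qhi: "c = n \<or> q c < w c" using w c by (cases "c = n") auto
    have noroot: "poly h x \<noteq> 0" if "min y (q c) \<le> x" "x \<le> max y (q c)" for x
    proof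
      assume "poly h x = 0"
      then obtain i where i: "i < n" "x = w i" using allroots by blast
      show False
      proof (cases "i < c")
        case True
        hence "w i \<le> w (c-1)" using wle[of i "c-1"] c i by auto
        moreover have "w (c-1) < y" "w (c-1) < q c" using lo qlo True by auto
        ultimately show False using that i by auto
      next
        case False
        hence "w c \<le> w i" using wle[of c i] i by auto
        moreover have "y < w c" "q c < w c" using hi qhi False i by auto
        ultimately show False using that i by auto
      qed
    qed
    have "poly h (min y (q c)) * poly h (max y (q c)) > 0"
      by (rule sign_const) (use noroot in auto)
    hence "poly h y * poly h (q c) > 0"
      by (cases "y \<le> q c") (auto simp: min_def max_def mult.commute)
    thus ?thesis using sign_transfer qsign c by blast
  qed
  show ?thesis using w allroots signs by blast
qed


lemma jacobi:
  assumes "\<forall>j<k. al j > 0 \<and> be j < (0::real)"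
  shows "\<exists>z. (\<forall>i<k. 0 < z i \<and> poly (fst (fgp al be k)) (z i) = 0 \<and> (-1)^i * poly (snd (fgp al be k)) (z i) > 0)
     \<and> (\<forall>i. Suc i < k \<longrightarrow> z i < z (Suc i))
     \<and> (\<forall>y c. c \<le> k \<longrightarrow> (c = 0 \<or> z (c-1) < y) \<longrightarrow> (c = k \<or> y < z c) \<longrightarrow> (-1)^c * poly (fst (fgp al be k)) y > 0)
     \<and> degree (fst (fgp al be k)) = k \<and> (-1)^k * lead_coeff (fst (fgp al be k)) > 0
     \<and> (snd (fgp al be k) = 0 \<or> degree (snd (fgp al be k)) < k)"
  using assms
proof (induction k)
  case 0
  show ?case by (intro exI[of _ "\<lambda>_. 0"]) auto
next
  case (Suc k)
  from Suc.prems have ab: "al k > 0" "be k < 0" by auto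
  from Suc.IH Suc.prems obtain z where
    zr: "\<forall>i<k. 0 < z i \<and> poly (fst (fgp al be k)) (z i) = 0 \<and> (-1)^i * poly (snd (fgp al be k)) (z i) > 0"
    and zm: "\<forall>i. Suc i < k \<longrightarrow> z i < z (Suc i)"
    and zg: "\<forall>y c. c \<le> k \<longrightarrow> (c = 0 \<or> z (c-1) < y) \<longrightarrow> (c = k \<or> y < z c) \<longrightarrow> (-1)^c * poly (fst (fgp al be k)) y > 0"
    and dgf: "degree (fst (fgp al be k)) = k" and lcf: "(-1)^k * lead_coeff (fst (fgp al be k)) > 0"
    and dgg: "snd (fgp al be k) = 0 \<or> degree (snd (fgp al be k)) < k"
    by auto
  define f where "f = fst (fgp al be k)"
  define g where "g = snd (fgp al be k)"
  define g1 where "g1 = g + smult (al k) f"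
  define f1 where "f1 = f + smult (be k) (pCons 0 g1)"
  have fg1: "fgp al be (Suc k) = (f1, g1)" by (simp add: pstp_def f1_def g1_def f_def g_def)
  have f0: "f \<noteq> 0" using lcf f_def by auto
  have dsf: "degree (smult (al k) f) = k" using ab dgf f_def by simp
  have dg1: "degree g1 = k" and lcg1: "lead_coeff g1 = al k * lead_coeff f"
  proof -
    have "degree g1 = k \<and> lead_coeff g1 = al k * lead_coeff f"
    proof (cases "g = 0")
      case True thus ?thesis using dsf dgf ab by (simp add: g1_def f_def)
    next
      case False
      hence "degree g < degree (smult (al k) f)" using dgg dsf g_def by auto
      hence "degree g1 = degree (smult (al k) f)" "lead_coeff g1 = lead_coeff (smult (al k) f)"
        unfolding g1_def by (rule degree_add_eq_right, rule lead_coeff_add_le)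
      thus ?thesis using dsf dgf ab f_def by simp
    qed
    thus "degree g1 = k" "lead_coeff g1 = al k * lead_coeff f" by auto
  qed
  have g10: "g1 \<noteq> 0" using lcg1 ab f0 by auto
  have dp: "degree (smult (be k) (pCons 0 g1)) = Suc k" using ab g10 dg1 by simp
  have df1: "degree f1 = Suc k" and lcf1: "lead_coeff f1 = be k * lead_coeff g1"
  proof -
    have "degree f < degree (smult (be k) (pCons 0 g1))" using dp dgf f_def by simp
    hence "degree f1 = degree (smult (be k) (pCons 0 g1))" "lead_coeff f1 = lead_coeff (smult (be k) (pCons 0 g1))"
      unfolding f1_def by (rule degree_add_eq_right, rule lead_coeff_add_le)
    thus "degree f1 = Suc k" "lead_coeff f1 = be k * lead_coeff g1" using dp g10 dg1 by simp_all
  qed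
  have lcf1s: "(-1)^(Suc k) * lead_coeff f1 > 0"
  proof -
    have "(-1)^(Suc k) * lead_coeff f1 = ((-1)^k * lead_coeff f) * (al k * (- be k))"
      using lcf1 lcg1 by (simp add: algebra_simps)
    moreover have "((-1)^k * lead_coeff f) * (al k * (- be k)) > 0"
      by (rule mult_pos_pos) (simp_all add: lcf[folded f_def] ab mult_pos_neg)
    ultimately show ?thesis by simp
  qed
  have lcg1s: "(-1)^k * lead_coeff g1 > 0"
  proof -
    have "(-1)^k * lead_coeff g1 = ((-1)^k * lead_coeff f) * al k" using lcg1 by (simp add: algebra_simps)
    moreover have "((-1)^k * lead_coeff f) * al k > 0"
      by (rule mult_pos_pos) (simp_all add: lcf[folded f_def] ab mult_pos_neg)
    ultimately show ?thesis by simp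
  qed
  have f10: "f1 \<noteq> 0" using lcf1s by auto
  obtain R1 where R1: "\<forall>x\<ge>R1. (-1)^k * poly g1 x > 0" using sign_inf[OF lcg1s] by blast
  define Rg where "Rg = max R1 (if k = 0 then 1 else z (k-1) + 1)"
  define s where "s = (\<lambda>i. if i < k then z i else Rg)"
  have smono: "\<forall>i<k. s i < s (Suc i)"
  proof (intro allI impI)
    fix i assume i: "i < k"
    show "s i < s (Suc i)"
    proof (cases "Suc i < k")
      case True thus ?thesis using zm i by (simp add: s_def)
    next
      case False hence "Suc i = k" using i by simp
      thus ?thesis using i by (auto simp: s_def Rg_def)
    qed
  qed
  have ssign: "\<forall>i\<le>k. (-1)^i * poly g1 (s i) > 0"
  proof (intro allI impI)
    fix i assume i: "i \<le> k"
    show "(-1)^i * poly g1 (s i) > 0"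
    proof (cases "i < k")
      case True thus ?thesis using zr by (simp add: s_def g1_def f_def g_def)
    next
      case False hence "i = k" using i by simp
      thus ?thesis using R1 by (simp add: s_def Rg_def)
    qed
  qed
  from roots_from_samples[OF g10 _ smono ssign] dg1 obtain eta where
    eta1: "\<forall>i<k. s i < eta i \<and> eta i < s (Suc i) \<and> poly g1 (eta i) = 0"
    and eta3: "\<forall>y c. c \<le> k \<longrightarrow> (c = 0 \<or> eta (c-1) < y) \<longrightarrow> (c = k \<or> y < eta c) \<longrightarrow> (-1)^c * poly g1 y > 0"
    by auto
  obtain R2 where R2: "\<forall>x\<ge>R2. (-1)^(Suc k) * poly f1 x > 0" using sign_inf[OF lcf1s] by blast
  define Rf where "Rf = max R2 (if k = 0 then 1 else eta (k-1) + 1)"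
  define q where "q = (\<lambda>i. if i = 0 then 0 else if i - 1 < k then eta (i-1) else Rf)"
  have spos: "s i > 0" for i
  proof (cases "i < k")
    case True thus ?thesis using zr by (simp add: s_def)
  next
    case False
    have "k > 0 \<Longrightarrow> z (k-1) > 0" using zr by auto
    thus ?thesis using False by (auto simp: s_def Rg_def max_def)
  qed
  have qmono: "\<forall>i<Suc k. q i < q (Suc i)"
  proof (intro allI impI)
    fix i assume i: "i < Suc k"
    show "q i < q (Suc i)"
    proof (cases "i = 0")
      case True
      show ?thesis
      proof (cases "k = 0")
        case True thus ?thesis using \<open>i = 0\<close> by (simp add: q_def Rf_def)
      next
        case False thus ?thesis using \<open>i = 0\<close> eta1 spos[of 0] by (auto simp: q_def)
      qed
    next
      case False
      show ?thesis
      proof (cases "i < k")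
        case True
        have i1: "i - 1 < k" "Suc (i - 1) = i" using True False by auto
        have "eta (i-1) < s (Suc (i-1))" using eta1 i1(1) by blast
        hence "eta (i-1) < s i" using i1(2) by simp
        moreover have "s i < eta i" using eta1 True by blast
        ultimately have "eta (i-1) < s i" "s i < eta i" by auto
        thus ?thesis using True False i1 by (simp add: q_def)
      next
        case False2: False
        hence "i = k" using i by simp
        thus ?thesis using False by (simp add: q_def Rf_def)
      qed
    qed
  qed
  have poly_f0: "poly f 0 = 1" using fgp_eval[of al be k 0] FG_zero[of al be k] f_def by simp
  have qsign: "\<forall>i\<le>Suc k. (-1)^i * poly f1 (q i) > 0"
  proof (intro allI impI)
    fix i assume i: "i \<le> Suc k"
    show "(-1)^i * poly f1 (q i) > 0"
    proof (cases "i = 0")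
      case True thus ?thesis using poly_f0 by (simp add: q_def f1_def)
    next
      case False
      then obtain j where j: "i = Suc j" by (cases i) auto
      show ?thesis
      proof (cases "j < k")
        case True
        have e: "s j < eta j" "eta j < s (Suc j)" "poly g1 (eta j) = 0" using eta1 True by auto
        have "(-1)^(Suc j) * poly f (eta j) > 0"
        proof -
          have "Suc j \<le> k" using True by simp
          moreover have "z j < eta j" using e True by (simp add: s_def)
          moreover have "Suc j = k \<or> eta j < z (Suc j)" using e True by (cases "Suc j < k") (auto simp: s_def)
          ultimately show ?thesis unfolding f_def by (intro zg[rule_format]) auto
        qed
        thus ?thesis using j True e by (simp add: q_def f1_def)
      next
        case False
        hence "j = k" using i j by simp
        thus ?thesis using R2 j by (simp add: q_def Rf_def)
      qed
    qed
  qed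
  from roots_from_samples[OF f10 _ qmono qsign] df1 obtain w where
    w1: "\<forall>i<Suc k. q i < w i \<and> w i < q (Suc i) \<and> poly f1 (w i) = 0"
    and w3: "\<forall>y c. c \<le> Suc k \<longrightarrow> (c = 0 \<or> w (c-1) < y) \<longrightarrow> (c = Suc k \<or> y < w c) \<longrightarrow> (-1)^c * poly f1 y > 0"
    by auto
  have etapos: "eta j > 0" if "j < k" for j
  proof -
    have "s j < eta j" using eta1 that by auto
    thus ?thesis using spos[of j] by linarith
  qed
  have qnn: "q i \<ge> 0" for i
  proof (cases "i = 0")
    case False
    show ?thesis
    proof (cases "i - 1 < k")
      case True thus ?thesis using False etapos[of "i-1"] by (simp add: q_def)
    next
      case F2: False
      have "k > 0 \<Longrightarrow> eta (k-1) > 0" using etapos by simp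
      thus ?thesis using False F2 by (auto simp: q_def Rf_def max_def)
    qed
  qed (simp add: q_def)
  have A: "\<forall>i<Suc k. 0 < w i \<and> poly f1 (w i) = 0 \<and> (-1)^i * poly g1 (w i) > 0"
  proof (intro allI impI)
    fix i assume i: "i < Suc k"
    have "q i < w i" "w i < q (Suc i)" "poly f1 (w i) = 0" using w1 i by auto
    moreover have "0 < w i" using qnn[of i] \<open>q i < w i\<close> by simp
    moreover have "(-1)^i * poly g1 (w i) > 0"
    proof -
      have "i = 0 \<or> eta (i-1) < w i"
      proof (cases i)
        case (Suc j) thus ?thesis using \<open>q i < w i\<close> i by (simp add: q_def)
      qed simp
      moreover have "i = k \<or> w i < eta i" using \<open>w i < q (Suc i)\<close> i by (cases "i = k") (auto simp: q_def)
      ultimately show ?thesis using i by (intro eta3[rule_format]) auto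
    qed
    ultimately show "0 < w i \<and> poly f1 (w i) = 0 \<and> (-1)^i * poly g1 (w i) > 0" by auto
  qed
  have B: "\<forall>i. Suc i < Suc k \<longrightarrow> w i < w (Suc i)"
  proof (intro allI impI)
    fix i assume i: "Suc i < Suc k"
    have "w i < q (Suc i)" using w1 i by simp
    moreover have "q (Suc i) < w (Suc i)" using w1 i by blast
    ultimately show "w i < w (Suc i)" by linarith
  qed
  show ?case unfolding fg1 fst_conv snd_conv
    apply (rule exI[of _ w])
    using A B w3 df1 lcf1s dg1 by blast
qed


lemma FG_add:
  "FG al be y s (k1 + k2) = FG (\<lambda>j. al (k1 + j)) (\<lambda>j. be (k1 + j)) y (FG al be y s k1) k2"
  by (induction k2) auto

lemma FG_lin:
  fixes F G :: "'a::comm_ring_1"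
  shows "FG al be y (F, G) k =
    (F * fst (FG al be y (1,0) k) + G * fst (FG al be y (0,1) k),
     F * snd (FG al be y (1,0) k) + G * snd (FG al be y (0,1) k))"
  by (induction k) (auto simp: stp_def algebra_simps)

lemma FG_cas:
  "fst (FG al be y (1,0) k) * snd (FG al be y (0,1) k) - snd (FG al be y (1,0) k) * fst (FG al be y (0,1) k) = (1::'a::comm_ring_1)"
proof (induction k)
  case 0 thus ?case by simp
next
  case (Suc k)
  thus ?case by (simp add: stp_def algebra_simps)
qed

lemma FG_neg: "FG al be (-y) s k = FG al (\<lambda>j. - be j) (y::'a::comm_ring_1) s k"
  by (induction k) (auto simp: stp_def)

lemma FG_pos1:
  fixes y :: real
  assumes "\<forall>j<k. al j > 0 \<and> be j * y \<ge> 0" "F > 0" "G \<ge> 0"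
  shows "fst (FG al be y (F,G) k) > 0 \<and> snd (FG al be y (F,G) k) \<ge> 0 \<and> (k > 0 \<longrightarrow> snd (FG al be y (F,G) k) > 0)"
  using assms
proof (induction k)
  case 0 thus ?case by simp
next
  case (Suc k)
  define F0 where "F0 = fst (FG al be y (F,G) k)"
  define G0 where "G0 = snd (FG al be y (F,G) k)"
  have h: "F0 > 0" "G0 \<ge> 0" using Suc by (auto simp: F0_def G0_def)
  have a: "al k > 0" "be k * y \<ge> 0" using Suc.prems by auto
  have g1: "G0 + al k * F0 > 0" using h a by (simp add: add_nonneg_pos)
  have "be k * y * (G0 + al k * F0) \<ge> 0" using a g1 by simp
  hence "F0 + be k * y * (G0 + al k * F0) > 0" using h by linarith
  thus ?case using g1 by (simp add: stp_def F0_def[symmetric] G0_def[symmetric])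
qed

lemma FG_pos2:
  fixes y :: real
  assumes "\<forall>j<k. al j > 0 \<and> be j * y > 0" "k > 0"
  shows "fst (FG al be y (0,1) k) > 0"
proof -
  have inv: "fst (FG al be y (0,1) k) \<ge> 0 \<and> snd (FG al be y (0,1) k) > 0 \<and> (k > 0 \<longrightarrow> fst (FG al be y (0,1) k) > 0)"
    if "\<forall>j<k. al j > 0 \<and> be j * y > 0" for k
    using that
  proof (induction k)
    case 0 thus ?case by simp
  next
    case (Suc k)
    define F0 where "F0 = fst (FG al be y (0,1) k)"
    define G0 where "G0 = snd (FG al be y (0,1) k)"
    have h: "F0 \<ge> 0" "G0 > 0" using Suc by (auto simp: F0_def G0_def)
    have a: "al k > 0" "be k * y > 0" using Suc.prems by auto
    have g1: "G0 + al k * F0 > 0" using h a by (simp add: add_pos_nonneg)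
    have "be k * y * (G0 + al k * F0) > 0" using a g1 by simp
    hence "F0 + be k * y * (G0 + al k * F0) > 0" using h by linarith
    thus ?case using g1 by (simp add: stp_def F0_def[symmetric] G0_def[symmetric])
  qed
  show ?thesis using inv[OF assms(1)] assms(2) by auto
qed

lemma FG_H:
  fixes y s :: real
  assumes "\<forall>j<k. al j \<ge> 1 \<and> be j * y \<ge> 0" "s * F > 0" "s * F + 2 * (s * G) \<ge> 0"
  shows "s * fst (FG al be y (F,G) k) > 0 \<and> s * fst (FG al be y (F,G) k) + 2 * (s * snd (FG al be y (F,G) k)) \<ge> 0"
  using assms
proof (induction k)
  case 0 thus ?case by simp
next
  case (Suc k)
  define F0 where "F0 = s * fst (FG al be y (F,G) k)"
  define G0 where "G0 = s * snd (FG al be y (F,G) k)"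
  have h: "F0 > 0" "F0 + 2 * G0 \<ge> 0" using Suc by (auto simp: F0_def G0_def)
  have a: "al k \<ge> 1" "be k * y \<ge> 0" using Suc.prems by auto
  have aF: "al k * F0 \<ge> F0" using a h by simp
  have g1a: "G0 + al k * F0 > 0" using h aF by linarith
  have "F0 + 2 * (G0 + al k * F0) = (F0 + 2 * G0) + 2 * (al k * F0)" by (simp add: algebra_simps)
  moreover have "al k * F0 > 0" using a h by simp
  ultimately have g1b: "F0 + 2 * (G0 + al k * F0) \<ge> 0" using h by linarith
  note g1 = g1a g1b
  define G1 where "G1 = G0 + al k * F0"
  define F1 where "F1 = F0 + be k * y * G1"
  have "be k * y * G1 \<ge> 0" using a g1 by (simp add: G1_def)
  hence f1: "F1 > 0" using h by (simp add: F1_def)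
  have e1: "s * fst (FG al be y (F,G) (Suc k)) = F1"
    by (simp add: stp_def F0_def G0_def F1_def G1_def algebra_simps)
  have e2: "s * snd (FG al be y (F,G) (Suc k)) = G1"
    by (simp add: stp_def F0_def G0_def G1_def algebra_simps)
  have "G1 > 0" using g1 by (simp add: G1_def)
  thus ?case unfolding e1 e2 using f1 by simp
qed

lemma FG_big:
  fixes y :: real
  assumes "\<forall>j<k. al j \<ge> 1 \<and> be j \<ge> 1" "y \<le> -4"
  shows "(-1)^k * fst (FG al be y (1,0) k) \<ge> 1 \<and> (-1)^k * fst (FG al be y (1,0) k) + 2 * ((-1)^k * snd (FG al be y (1,0) k)) \<ge> 0
     \<and> (-1)^k * snd (FG al be y (1,0) k) \<le> 0"
  using assms
proof (induction k)
  case 0 thus ?case by simp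
next
  case (Suc k)
  define phi where "phi = (-1)^k * fst (FG al be y (1,0) k)"
  define psi where "psi = - ((-1)^k * snd (FG al be y (1,0) k))"
  have h: "phi \<ge> 1" "phi \<ge> 2 * psi" "psi \<ge> 0" using Suc by (auto simp: phi_def psi_def)
  have a: "al k \<ge> 1" "be k \<ge> 1" using Suc.prems by auto
  define psi1 where "psi1 = al k * phi - psi"
  define phi1 where "phi1 = - be k * y * psi1 - phi"
  have aP: "al k * phi \<ge> phi" using a h by simp
  have p1: "psi1 \<ge> phi / 2" "psi1 \<ge> 0" unfolding psi1_def using h aP by linarith+
  have "- be k * y \<ge> 4" 
  proof -
    have "be k * (- y) \<ge> 1 * 4" using a Suc.prems by (intro mult_mono) auto
    thus ?thesis by simp
  qed
  hence "(- be k * y) * psi1 \<ge> 4 * psi1" using p1 by (intro mult_right_mono) auto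
  hence p2: "phi1 \<ge> 2 * psi1" "phi1 \<ge> 1" using p1 h by (simp_all add: phi1_def)
  have e1: "(-1)^(Suc k) * fst (FG al be y (1,0) (Suc k)) = phi1"
    by (simp add: stp_def phi1_def psi1_def phi_def psi_def algebra_simps)
  have e2: "(-1)^(Suc k) * snd (FG al be y (1,0) (Suc k)) = - psi1"
    by (simp add: stp_def phi1_def psi1_def phi_def psi_def algebra_simps)
  show ?case unfolding e1 e2 apply (intro conjI) using p1 p2 by linarith+
qed

lemma fgp_deg:
  assumes "\<forall>j<k. al j \<noteq> 0 \<and> be j \<noteq> 0"
  shows "degree (fst (fgp al be k)) = k \<and> lead_coeff (fst (fgp al be k)) = (\<Prod>j<k. al j * be j)
    \<and> (snd (fgp al be k) = 0 \<or> degree (snd (fgp al be k)) < k)"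
  using assms
proof (induction k)
  case 0 thus ?case by simp
next
  case (Suc k)
  define f where "f = fst (fgp al be k)"
  define g where "g = snd (fgp al be k)"
  define g1 where "g1 = g + smult (al k) f"
  define f1 where "f1 = f + smult (be k) (pCons 0 g1)"
  have fg1: "fgp al be (Suc k) = (f1, g1)" by (simp add: pstp_def f1_def g1_def f_def g_def)
  have ab: "al k \<noteq> 0" "be k \<noteq> 0" using Suc.prems by auto
  have IH: "degree f = k" "lead_coeff f = (\<Prod>j<k. al j * be j)" "g = 0 \<or> degree g < k"
    using Suc by (auto simp: f_def g_def)
  have f0: "f \<noteq> 0" using IH(2) Suc.prems by (auto simp: prod_zero_iff)
  have dsf: "degree (smult (al k) f) = k" using ab IH by simp
  have dg1: "degree g1 = k" and lcg1: "lead_coeff g1 = al k * lead_coeff f"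
  proof -
    have "degree g1 = k \<and> lead_coeff g1 = al k * lead_coeff f"
    proof (cases "g = 0")
      case True thus ?thesis using dsf IH ab by (simp add: g1_def)
    next
      case False
      hence "degree g < degree (smult (al k) f)" using IH dsf by auto
      hence "degree g1 = degree (smult (al k) f)" "lead_coeff g1 = lead_coeff (smult (al k) f)"
        unfolding g1_def by (rule degree_add_eq_right, rule lead_coeff_add_le)
      thus ?thesis using dsf IH ab by simp
    qed
    thus "degree g1 = k" "lead_coeff g1 = al k * lead_coeff f" by auto
  qed
  have g10: "g1 \<noteq> 0" using lcg1 ab f0 by auto
  have dp: "degree (smult (be k) (pCons 0 g1)) = Suc k" using ab g10 dg1 by simp
  have "degree f < degree (smult (be k) (pCons 0 g1))" using dp IH by simp
  hence "degree f1 = degree (smult (be k) (pCons 0 g1))" "lead_coeff f1 = lead_coeff (smult (be k) (pCons 0 g1))"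
    unfolding f1_def by (rule degree_add_eq_right, rule lead_coeff_add_le)
  hence "degree f1 = Suc k" "lead_coeff f1 = be k * lead_coeff g1" using dp g10 dg1 by simp_all
  thus ?case unfolding fg1 using lcg1 IH dg1 by (simp add: algebra_simps)
qed

lemma ivt_samples:
  fixes h :: "real poly" and q :: "nat \<Rightarrow> real" and n :: nat and sg :: real
  assumes qmono: "\<forall>i<n. q i < q (Suc i)"
    and qsign: "\<forall>i\<le>n. (-1)^i * (sg * poly h (q i)) > 0"
  shows "\<exists>w. \<forall>i<n. q i < w i \<and> w i < q (Suc i) \<and> poly h (w i) = 0"
proof -
  have "\<forall>i. \<exists>x. i < n \<longrightarrow> q i < x \<and> x < q (Suc i) \<and> poly h x = 0"
  proof
    fix i
    show "\<exists>x. i < n \<longrightarrow> q i < x \<and> x < q (Suc i) \<and> poly h x = 0"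
    proof (cases "i < n")
      case True
      have "(sg * poly h (q i)) * (sg * poly h (q (Suc i))) < 0"
      proof (rule neg1_pow_prod_neg[of i])
        show "(-1)^i * (sg * poly h (q i)) > 0" using qsign True by auto
        show "(-1)^(Suc i) * (sg * poly h (q (Suc i))) > 0" using qsign True by (metis Suc_leI)
      qed
      hence "poly h (q i) * poly h (q (Suc i)) < 0"
        by (metis mult.assoc mult.commute mult_zero_left not_square_less_zero
            zero_less_mult_iff linorder_neqE_linordered_idom mult_less_0_iff)
      from poly_IVT[OF _ this] qmono True show ?thesis by blast
    qed auto
  qed
  thus ?thesis by (metis choice)
qed


lemma fgp_neg_eval: "poly (fst (fgp al (\<lambda>j. - be j) k)) w = fst (FG al be (-w) (1,0) k)"
  using fgp_eval[of al "\<lambda>j. - be j" k w] FG_neg[of al be w "(1,0)" k] by simp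

lemma jacobi_neg:
  assumes "\<forall>j<k. al j > 0 \<and> be j > (0::real)"
  shows "\<exists>z. (\<forall>i<k. 0 < z i \<and> fst (FG al be (- z i) (1,0) k) = 0 \<and> (-1)^i * snd (FG al be (- z i) (1,0) k) > 0)
     \<and> (\<forall>i. Suc i < k \<longrightarrow> z i < z (Suc i))"
proof -
  from jacobi[of k al "\<lambda>j. - be j"] assms obtain z where
    "\<forall>i<k. 0 < z i \<and> poly (fst (fgp al (\<lambda>j. - be j) k)) (z i) = 0 \<and> (-1)^i * poly (snd (fgp al (\<lambda>j. - be j) k)) (z i) > 0"
    "\<forall>i. Suc i < k \<longrightarrow> z i < z (Suc i)" by auto
  thus ?thesis using fgp_eval[of al "\<lambda>j. - be j" k] FG_neg[of al be _ "(1,0)" k]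
    by (intro exI[of _ z]) auto
qed

lemma jacobi_pos:
  assumes "\<forall>j<k. al j > 0 \<and> be j < (0::real)"
  shows "\<exists>z. (\<forall>i<k. 0 < z i \<and> fst (FG al be (z i) (1,0) k) = 0 \<and> (-1)^i * snd (FG al be (z i) (1,0) k) > 0)
     \<and> (\<forall>i. Suc i < k \<longrightarrow> z i < z (Suc i))"
proof -
  from jacobi[of k al be] assms obtain z where
    "\<forall>i<k. 0 < z i \<and> poly (fst (fgp al be k)) (z i) = 0 \<and> (-1)^i * poly (snd (fgp al be k)) (z i) > 0"
    "\<forall>i. Suc i < k \<longrightarrow> z i < z (Suc i)" by auto
  thus ?thesis using fgp_eval[of al be k] by (intro exI[of _ z]) auto
qed

lemma big_nonzero:
  assumes "\<forall>j<k. al j \<ge> 1 \<and> be j \<ge> 1" "w \<ge> (4::real)"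
  shows "fst (FG al be (-w) (1,0) k) \<noteq> 0"
  using FG_big[OF assms(1), of "-w"] assms(2) by auto

lemma mono_inj:
  fixes w :: "nat \<Rightarrow> real"
  assumes "\<forall>i. Suc i < n \<longrightarrow> w i < w (Suc i)"
  shows "\<forall>i j. i < j \<longrightarrow> j < n \<longrightarrow> w i < w j"
proof (intro allI impI)
  fix i j assume ij: "i < j" "j < n"
  have "\<forall>i<n-1. w i < w (Suc i)" using assms by auto
  from step_mono[OF this ij(1)] ij show "w i < w j" by auto
qed

text \<open>Case 1: pairs a then b.  Claim A (unit circle).\<close>
lemma claimA1:
  assumes m: "m \<ge> 1" and p: "p \<ge> 1"
    and A: "\<forall>j<m. al j \<ge> 1 \<and> be j \<ge> (1::real)"
    and B: "\<forall>j. m \<le> j \<and> j < m + p \<longrightarrow> al j \<ge> 1 \<and> be j \<le> -1"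
  shows "\<exists>w. (\<forall>i<m. 0 < w i \<and> w i < 4 \<and> fst (FG al be (- w i) (1,0) (m+p)) = 0)
     \<and> (\<forall>i. Suc i < m \<longrightarrow> w i < w (Suc i))"
proof -
  define h where "h = fst (fgp al (\<lambda>j. - be j) (m+p))"
  have hev: "poly h w = fst (FG al be (-w) (1,0) (m+p))" for w
    unfolding h_def by (rule fgp_neg_eval)
  from jacobi_neg[of m al be] A obtain z where
    z1: "\<forall>i<m. 0 < z i \<and> fst (FG al be (- z i) (1,0) m) = 0 \<and> (-1)^i * snd (FG al be (- z i) (1,0) m) > 0"
    and z2: "\<forall>i. Suc i < m \<longrightarrow> z i < z (Suc i)" by force
  have z4: "z i < 4" if "i < m" for i
    using big_nonzero[of m al be "z i"] A z1 that by force
  define sal where "sal = (\<lambda>j. al (m + j))"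
  define sbe where "sbe = (\<lambda>j. be (m + j))"
  have split: "FG al be y (1,0) (m+p) = FG sal sbe y (FG al be y (1,0) m) p" for y
    unfolding sal_def sbe_def by (rule FG_add)
  have sB: "\<forall>j<p. sal j \<ge> 1 \<and> sbe j \<le> -1" using B by (auto simp: sal_def sbe_def)
  have zsign: "(-1)^i * poly h (z i) > 0" if i: "i < m" for i
  proof -
    define G where "G = snd (FG al be (- z i) (1,0) m)"
    have S: "FG al be (- z i) (1,0) m = (0, G)" using z1 i by (simp add: G_def prod_eq_iff)
    have Y: "fst (FG sal sbe (- z i) (0,1) p) > 0"
    proof (rule FG_pos2)
      show "\<forall>j<p. sal j > 0 \<and> sbe j * (- z i) > 0"
      proof (intro allI impI conjI)
        fix j assume "j < p"
        hence "sal j \<ge> 1" "sbe j \<le> -1" using sB by auto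
        moreover have "z i > 0" using z1 i by auto
        ultimately show "sal j > 0" "sbe j * (- z i) > 0" by (auto simp: mult_neg_pos)
      qed
    qed (use p in simp)
    have "poly h (z i) = G * fst (FG sal sbe (- z i) (0,1) p)"
      unfolding hev split S by (subst FG_lin) simp
    moreover have "(-1)^i * G > 0" using z1 i by (simp add: G_def)
    ultimately show ?thesis using Y by (simp add: mult.assoc[symmetric])
  qed
  have sign4: "(-1)^m * poly h 4 > 0"
  proof -
    define S where "S = FG al be (-4) (1,0) m"
    have b: "(-1)^m * fst S \<ge> 1" "(-1)^m * fst S + 2 * ((-1)^m * snd S) \<ge> 0"
      using FG_big[of m al be "-4"] A by (auto simp: S_def)
    have "(-1)^m * fst (FG sal sbe (-4) (fst S, snd S) p) > 0"
    proof -
      have "\<forall>j<p. sal j \<ge> 1 \<and> sbe j * (-4) \<ge> 0" using sB by auto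
      from FG_H[OF this, of "(-1)^m" "fst S" "snd S"] b show ?thesis by auto
    qed
    thus ?thesis unfolding hev split S_def by simp
  qed
  define q where "q = (\<lambda>i. if i < m then z i else 4)"
  have qmono: "\<forall>i<m. q i < q (Suc i)"
  proof (intro allI impI)
    fix i assume i: "i < m"
    show "q i < q (Suc i)"
      using z2 z4 i by (cases "Suc i < m") (auto simp: q_def)
  qed
  have qsign: "\<forall>i\<le>m. (-1)^i * (1 * poly h (q i)) > 0"
  proof (intro allI impI)
    fix i assume "i \<le> m"
    thus "(-1)^i * (1 * poly h (q i)) > 0"
      using zsign sign4 by (cases "i < m") (auto simp: q_def)
  qed
  from ivt_samples[OF qmono qsign] obtain w where
    w: "\<forall>i<m. q i < w i \<and> w i < q (Suc i) \<and> poly h (w i) = 0" by blast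
  have qb: "0 < q i" "q i \<le> 4" for i using z1 z4[of i] by (auto simp: q_def)
  show ?thesis
  proof (intro exI[of _ w] conjI allI impI)
    fix i assume i: "i < m"
    show "0 < w i" using w i qb[of i] by force
    show "w i < 4" using w i qb[of "Suc i"] by force
    show "fst (FG al be (- w i) (1,0) (m+p)) = 0" using w i hev by auto
  next
    fix i assume i: "Suc i < m"
    show "w i < w (Suc i)" using w i by (meson Suc_lessD less_trans)
  qed
qed

lemma sign_flip:
  fixes a b :: real
  assumes "a * b = -1" "(-1)^i * a > 0"
  shows "(-1)^(Suc i) * b > 0"
proof -
  have "((-1)^i * a) * ((-1)^(Suc i) * b) = - (a * b) * ((-1)^i * (-1)^i)" by (simp add: algebra_simps)
  also have "(-1::real)^i * (-1)^i = 1" by (simp add: power_add[symmetric])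
  finally have eq: "((-1)^i * a) * ((-1)^(Suc i) * b) = 1" using assms(1) by simp
  have aux: "y > 0" if "x > 0" "x * y = 1" for x y :: real
  proof -
    have "y = 1 / x" using that by (simp add: field_simps)
    thus ?thesis using that by simp
  qed
  show ?thesis by (rule aux[OF assms(2) eq])
qed

text \<open>Case 2: pairs b then a.  Claim A (unit circle).\<close>
lemma claimA2:
  assumes m: "m \<ge> 1" and p: "p \<ge> 1"
    and B: "\<forall>j<p. al j \<ge> 1 \<and> be j \<le> (-1::real)"
    and A: "\<forall>j. p \<le> j \<and> j < p + m \<longrightarrow> al j \<ge> 1 \<and> be j \<ge> 1"
  shows "\<exists>w. (\<forall>i<m. 0 < w i \<and> w i < 4 \<and> fst (FG al be (- w i) (1,0) (p+m)) = 0)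
     \<and> (\<forall>i. Suc i < m \<longrightarrow> w i < w (Suc i))"
proof -
  define h where "h = fst (fgp al (\<lambda>j. - be j) (p+m))"
  have hev: "poly h w = fst (FG al be (-w) (1,0) (p+m))" for w
    unfolding h_def by (rule fgp_neg_eval)
  define sal where "sal = (\<lambda>j. al (p + j))"
  define sbe where "sbe = (\<lambda>j. be (p + j))"
  have split: "FG al be y (1,0) (p+m) = FG sal sbe y (FG al be y (1,0) p) m" for y
    unfolding sal_def sbe_def by (rule FG_add)
  have sA: "\<forall>j<m. sal j \<ge> 1 \<and> sbe j \<ge> 1" using A by (auto simp: sal_def sbe_def)
  from jacobi_neg[of m sal sbe] sA obtain z where
    z1: "\<forall>i<m. 0 < z i \<and> fst (FG sal sbe (- z i) (1,0) m) = 0 \<and> (-1)^i * snd (FG sal sbe (- z i) (1,0) m) > 0"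
    and z2: "\<forall>i. Suc i < m \<longrightarrow> z i < z (Suc i)" by force
  have z4: "z i < 4" if "i < m" for i
    using big_nonzero[of m sal sbe "z i"] sA z1 that by force
  have zsign: "(-1)^(Suc i) * poly h (z i) > 0" if i: "i < m" for i
  proof -
    define S where "S = FG al be (- z i) (1,0) p"
    have Sp: "fst S > 0 \<and> snd S > 0"
    proof -
      have "\<forall>j<p. al j > 0 \<and> be j * (- z i) \<ge> 0"
      proof (intro allI impI conjI)
        fix j assume "j < p"
        hence "al j \<ge> 1" "be j \<le> -1" using B by auto
        moreover have "z i > 0" using z1 i by auto
        ultimately show "al j > 0" "be j * (- z i) \<ge> 0" by (auto simp: mult_nonpos_nonneg)
      qed
      from FG_pos1[OF this, of 1 0] p show ?thesis by (auto simp: S_def)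
    qed
    define X where "X = FG sal sbe (- z i) (1,0) m"
    define Y where "Y = FG sal sbe (- z i) (0,1) m"
    have X0: "fst X = 0" using z1 i by (simp add: X_def)
    have cas: "fst X * snd Y - snd X * fst Y = 1" unfolding X_def Y_def by (rule FG_cas)
    hence "snd X * fst Y = -1" using X0 by simp
    moreover have "(-1)^i * snd X > 0" using z1 i by (simp add: X_def)
    ultimately have "(-1)^(Suc i) * fst Y > 0" by (rule sign_flip)
    moreover have "poly h (z i) = fst S * fst X + snd S * fst Y"
      unfolding hev split S_def[symmetric] X_def Y_def by (subst prod.collapse[symmetric], subst FG_lin) simp
    ultimately have e: "poly h (z i) = snd S * fst Y" and yp: "(-1)^(Suc i) * fst Y > 0" using X0 by auto
    have "(-1)^(Suc i) * (snd S * fst Y) = snd S * ((-1)^(Suc i) * fst Y)" by (rule mult.left_commute)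
    thus ?thesis unfolding e using Sp yp by (metis mult_pos_pos)
  qed
  have h0: "poly h 0 = 1" unfolding hev using FG_zero[of al be "p+m"] by simp
  define q where "q = (\<lambda>i. if i = 0 then 0 else z (i - 1))"
  have qmono: "\<forall>i<m. q i < q (Suc i)"
  proof (intro allI impI)
    fix i assume i: "i < m"
    show "q i < q (Suc i)"
    proof (cases i)
      case 0 thus ?thesis using z1 m by (simp add: q_def)
    next
      case (Suc j) thus ?thesis using z2 i by (simp add: q_def)
    qed
  qed
  have qsign: "\<forall>i\<le>m. (-1)^i * (1 * poly h (q i)) > 0"
  proof (intro allI impI)
    fix i assume i: "i \<le> m"
    show "(-1)^i * (1 * poly h (q i)) > 0"
    proof (cases i)
      case 0 thus ?thesis using h0 by (simp add: q_def)
    next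
      case (Suc j) thus ?thesis using zsign[of j] i by (simp add: q_def)
    qed
  qed
  from ivt_samples[OF qmono qsign] obtain w where
    w: "\<forall>i<m. q i < w i \<and> w i < q (Suc i) \<and> poly h (w i) = 0" by blast
  have qb: "0 \<le> q i" "q (Suc i) < 4" if "i < m" for i
    using z1[rule_format, of "i-1"] z4[of i] that by (auto simp: q_def less_imp_le)
  show ?thesis
  proof (intro exI[of _ w] conjI allI impI)
    fix i assume i: "i < m"
    show "0 < w i" using w i qb[of i] by force
    show "w i < 4" using w i qb[of i] by force
    show "fst (FG al be (- w i) (1,0) (p+m)) = 0" using w i hev by auto
  next
    fix i assume i: "Suc i < m"
    show "w i < w (Suc i)" using w i by (meson Suc_lessD less_trans)
  qed
qed

text \<open>Case 1: pairs a then b.  Claim B (real line).\<close>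
lemma claimB1:
  assumes m: "m \<ge> 1" and p: "p \<ge> 1"
    and A: "\<forall>j<m. al j \<ge> 1 \<and> be j \<ge> (1::real)"
    and B: "\<forall>j. m \<le> j \<and> j < m + p \<longrightarrow> al j \<ge> 1 \<and> be j \<le> -1"
  shows "\<exists>w. (\<forall>i<p. 0 < w i \<and> fst (FG al be (w i) (1,0) (m+p)) = 0)
     \<and> (\<forall>i. Suc i < p \<longrightarrow> w i < w (Suc i))"
proof -
  define h where "h = fst (fgp al be (m+p))"
  have hev: "poly h w = fst (FG al be w (1,0) (m+p))" for w
    unfolding h_def using fgp_eval by simp
  define sal where "sal = (\<lambda>j. al (m + j))"
  define sbe where "sbe = (\<lambda>j. be (m + j))"
  have split: "FG al be y (1,0) (m+p) = FG sal sbe y (FG al be y (1,0) m) p" for y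
    unfolding sal_def sbe_def by (rule FG_add)
  have sB: "\<forall>j<p. sal j \<ge> 1 \<and> sbe j \<le> -1" using B by (auto simp: sal_def sbe_def)
  from jacobi_pos[of p sal sbe] sB obtain z where
    z1: "\<forall>i<p. 0 < z i \<and> fst (FG sal sbe (z i) (1,0) p) = 0 \<and> (-1)^i * snd (FG sal sbe (z i) (1,0) p) > 0"
    and z2: "\<forall>i. Suc i < p \<longrightarrow> z i < z (Suc i)" by force
  have zsign: "(-1)^(Suc i) * poly h (z i) > 0" if i: "i < p" for i
  proof -
    define S where "S = FG al be (z i) (1,0) m"
    have Sp: "fst S > 0 \<and> snd S > 0"
    proof -
      have "\<forall>j<m. al j > 0 \<and> be j * (z i) \<ge> 0"
      proof (intro allI impI conjI)
        fix j assume "j < m"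
        hence "al j \<ge> 1" "be j \<ge> 1" using A by auto
        moreover have "z i > 0" using z1 i by auto
        ultimately show "al j > 0" "be j * (z i) \<ge> 0" by auto
      qed
      from FG_pos1[OF this, of 1 0] m show ?thesis by (auto simp: S_def)
    qed
    define X where "X = FG sal sbe (z i) (1,0) p"
    define Y where "Y = FG sal sbe (z i) (0,1) p"
    have X0: "fst X = 0" using z1 i by (simp add: X_def)
    have cas: "fst X * snd Y - snd X * fst Y = 1" unfolding X_def Y_def by (rule FG_cas)
    hence "snd X * fst Y = -1" using X0 by simp
    moreover have "(-1)^i * snd X > 0" using z1 i by (simp add: X_def)
    ultimately have "(-1)^(Suc i) * fst Y > 0" by (rule sign_flip)
    moreover have "poly h (z i) = fst S * fst X + snd S * fst Y"
      unfolding hev split S_def[symmetric] X_def Y_def by (subst prod.collapse[symmetric], subst FG_lin) simp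
    ultimately have e: "poly h (z i) = snd S * fst Y" and yp: "(-1)^(Suc i) * fst Y > 0" using X0 by auto
    have "(-1)^(Suc i) * (snd S * fst Y) = snd S * ((-1)^(Suc i) * fst Y)" by (rule mult.left_commute)
    thus ?thesis unfolding e using Sp yp by (metis mult_pos_pos)
  qed
  have h0: "poly h 0 = 1" unfolding hev using FG_zero[of al be "m+p"] by simp
  define q where "q = (\<lambda>i. if i = 0 then 0 else z (i - 1))"
  have qmono: "\<forall>i<p. q i < q (Suc i)"
  proof (intro allI impI)
    fix i assume i: "i < p"
    show "q i < q (Suc i)"
    proof (cases i)
      case 0 thus ?thesis using z1 p by (simp add: q_def)
    next
      case (Suc j) thus ?thesis using z2 i by (simp add: q_def)
    qed
  qed
  have qsign: "\<forall>i\<le>p. (-1)^i * (1 * poly h (q i)) > 0"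
  proof (intro allI impI)
    fix i assume i: "i \<le> p"
    show "(-1)^i * (1 * poly h (q i)) > 0"
    proof (cases i)
      case 0 thus ?thesis using h0 by (simp add: q_def)
    next
      case (Suc j) thus ?thesis using zsign[of j] i by (simp add: q_def)
    qed
  qed
  from ivt_samples[OF qmono qsign] obtain w where
    w: "\<forall>i<p. q i < w i \<and> w i < q (Suc i) \<and> poly h (w i) = 0" by blast
  have qb: "0 \<le> q i" if "i < p" for i
    using z1[rule_format, of "i-1"] that by (auto simp: q_def less_imp_le)
  show ?thesis
  proof (intro exI[of _ w] conjI allI impI)
    fix i assume i: "i < p"
    show "0 < w i" using w i qb[of i] by force
    show "fst (FG al be (w i) (1,0) (m+p)) = 0" using w i hev by auto
  next
    fix i assume i: "Suc i < p"
    show "w i < w (Suc i)" using w i by (meson Suc_lessD less_trans)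
  qed
qed

lemma prod_sign_neg:
  fixes al be :: "nat \<Rightarrow> real"
  assumes "\<forall>j<p. al j > 0 \<and> be j < 0" "k \<le> p"
  shows "(-1)^k * (\<Prod>j<k. al j * be j) > 0"
  using assms(2)
proof (induction k)
  case 0 thus ?case by simp
next
  case (Suc k)
  have "al k * be k < 0" using assms(1) Suc.prems by (auto simp: mult_pos_neg)
  moreover have "(-1)^k * (\<Prod>j<k. al j * be j) > 0" using Suc by auto
  moreover have eq: "(-1)^(Suc k) * (\<Prod>j<Suc k. al j * be j) = ((-1)^k * (\<Prod>j<k. al j * be j)) * (- (al k * be k))"
    by (simp add: algebra_simps)
  ultimately show ?case unfolding eq by (metis mult_pos_pos neg_0_less_iff_less)
qed

lemma prod_sign_pos:
  fixes al be :: "nat \<Rightarrow> real"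
  assumes "(-1)^p * (\<Prod>j<p. al j * be j) > 0" "\<forall>j. p \<le> j \<and> j < n \<longrightarrow> al j > 0 \<and> be j > 0" "p \<le> k" "k \<le> n"
  shows "(-1)^p * (\<Prod>j<k. al j * be j) > 0"
  using assms(3,4)
proof (induction k)
  case 0 thus ?case using assms(1) by simp
next
  case (Suc k)
  show ?case
  proof (cases "p = Suc k")
    case True thus ?thesis using assms(1) by simp
  next
    case False
    hence pk: "p \<le> k" using Suc.prems by simp
    have "al k * be k > 0" using assms(2) pk Suc.prems by auto
    moreover have "(-1)^p * (\<Prod>j<k. al j * be j) > 0" using Suc pk by auto
    moreover have eq: "(-1)^p * (\<Prod>j<Suc k. al j * be j) = ((-1)^p * (\<Prod>j<k. al j * be j)) * (al k * be k)"
      by (simp add: algebra_simps)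
    ultimately show ?thesis unfolding eq by (metis mult_pos_pos)
  qed
qed

text \<open>Case 2: pairs b then a.  Claim B (real line).\<close>
lemma claimB2:
  assumes m: "m \<ge> 1" and p: "p \<ge> 1"
    and B: "\<forall>j<p. al j \<ge> 1 \<and> be j \<le> (-1::real)"
    and A: "\<forall>j. p \<le> j \<and> j < p + m \<longrightarrow> al j \<ge> 1 \<and> be j \<ge> 1"
  shows "\<exists>w. (\<forall>i<p. 0 < w i \<and> fst (FG al be (w i) (1,0) (p+m)) = 0)
     \<and> (\<forall>i. Suc i < p \<longrightarrow> w i < w (Suc i))"
proof -
  define h where "h = fst (fgp al be (p+m))"
  have hev: "poly h w = fst (FG al be w (1,0) (p+m))" for w
    unfolding h_def using fgp_eval by simp
  define sal where "sal = (\<lambda>j. al (p + j))"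
  define sbe where "sbe = (\<lambda>j. be (p + j))"
  have split: "FG al be y (1,0) (p+m) = FG sal sbe y (FG al be y (1,0) p) m" for y
    unfolding sal_def sbe_def by (rule FG_add)
  have sA: "\<forall>j<m. sal j \<ge> 1 \<and> sbe j \<ge> 1" using A by (auto simp: sal_def sbe_def)
  have B': "\<forall>j<p. al j > 0 \<and> be j < 0" using B by force
  from jacobi_pos[of p al be] B' obtain z where
    z1: "\<forall>i<p. 0 < z i \<and> fst (FG al be (z i) (1,0) p) = 0 \<and> (-1)^i * snd (FG al be (z i) (1,0) p) > 0"
    and z2: "\<forall>i. Suc i < p \<longrightarrow> z i < z (Suc i)" by force
  have zsign: "(-1)^i * poly h (z i) > 0" if i: "i < p" for i
  proof -
    define G where "G = snd (FG al be (z i) (1,0) p)"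
    have S: "FG al be (z i) (1,0) p = (0, G)" using z1 i by (simp add: G_def prod_eq_iff)
    have Y: "fst (FG sal sbe (z i) (0,1) m) > 0"
    proof (rule FG_pos2)
      show "\<forall>j<m. sal j > 0 \<and> sbe j * (z i) > 0"
      proof (intro allI impI conjI)
        fix j assume "j < m"
        hence "sal j \<ge> 1" "sbe j \<ge> 1" using sA by auto
        moreover have "z i > 0" using z1 i by auto
        ultimately show "sal j > 0" "sbe j * (z i) > 0" by auto
      qed
    qed (use m in simp)
    have "poly h (z i) = G * fst (FG sal sbe (z i) (0,1) m)"
      unfolding hev split S by (subst FG_lin) simp
    moreover have "(-1)^i * G > 0" using z1 i by (simp add: G_def)
    ultimately show ?thesis using Y by (simp add: mult.assoc[symmetric])
  qed
  have lc: "(-1)^p * lead_coeff h > 0"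
  proof -
    have nz: "\<forall>j<p+m. al j \<noteq> 0 \<and> be j \<noteq> 0"
    proof (intro allI impI)
      fix j assume "j < p + m"
      show "al j \<noteq> 0 \<and> be j \<noteq> 0"
      proof (cases "j < p")
        case True thus ?thesis using B by force
      next
        case False thus ?thesis using A[rule_format, of j] \<open>j < p + m\<close> by force
      qed
    qed
    have "lead_coeff h = (\<Prod>j<p+m. al j * be j)"
      unfolding h_def using fgp_deg[OF nz] by blast
    moreover have "(-1)^p * (\<Prod>j<p+m. al j * be j) > 0"
    proof (rule prod_sign_pos)
      show "(-1)^p * (\<Prod>j<p. al j * be j) > 0" using prod_sign_neg[OF B'] by simp
      show "\<forall>j. p \<le> j \<and> j < p + m \<longrightarrow> al j > 0 \<and> be j > 0" using A by force
    qed auto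
    ultimately show ?thesis by simp
  qed
  obtain R where R: "\<forall>x\<ge>R. (-1)^p * poly h x > 0" using sign_inf[OF lc] by blast
  define Rf where "Rf = max R (z (p-1) + 1)"
  define q where "q = (\<lambda>i. if i < p then z i else Rf)"
  have qmono: "\<forall>i<p. q i < q (Suc i)"
  proof (intro allI impI)
    fix i assume i: "i < p"
    show "q i < q (Suc i)"
    proof (cases "Suc i < p")
      case True thus ?thesis using z2 by (simp add: q_def)
    next
      case False hence "i = p - 1" using i by simp
      thus ?thesis using False i by (simp add: q_def Rf_def)
    qed
  qed
  have qsign: "\<forall>i\<le>p. (-1)^i * (1 * poly h (q i)) > 0"
  proof (intro allI impI)
    fix i assume i: "i \<le> p"
    show "(-1)^i * (1 * poly h (q i)) > 0"
    proof (cases "i < p")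
      case True thus ?thesis using zsign by (simp add: q_def)
    next
      case False hence "i = p" using i by simp
      thus ?thesis using R by (simp add: q_def Rf_def)
    qed
  qed
  from ivt_samples[OF qmono qsign] obtain w where
    w: "\<forall>i<p. q i < w i \<and> w i < q (Suc i) \<and> poly h (w i) = 0" by blast
  have qb: "0 < q i" if "i < p" for i using z1 that by (auto simp: q_def)
  show ?thesis
  proof (intro exI[of _ w] conjI allI impI)
    fix i assume i: "i < p"
    show "0 < w i" using w i qb[of i] by force
    show "fst (FG al be (w i) (1,0) (p+m)) = 0" using w i hev by auto
  next
    fix i assume i: "Suc i < p"
    show "w i < w (Suc i)" using w i by (meson Suc_lessD less_trans)
  qed
qed


definition tri :: "nat \<Rightarrow> (nat \<Rightarrow> 'a::comm_ring_1) \<Rightarrow> 'a \<Rightarrow> 'a \<Rightarrow> 'a mat" where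
  "tri n d u l = mat n n (\<lambda>(i,j). if i = j then d i else if j = Suc i then u else if i = Suc j then l else 0)"

fun Dn :: "(nat \<Rightarrow> 'a::comm_ring_1) \<Rightarrow> 'a \<Rightarrow> nat \<Rightarrow> 'a" where
  "Dn d ul 0 = 1"
| "Dn d ul (Suc 0) = d 0"
| "Dn d ul (Suc (Suc k)) = d (Suc k) * Dn d ul (Suc k) - ul * Dn d ul k"

lemma tri_carrier: "tri n d u l \<in> carrier_mat n n" by (simp add: tri_def)

lemma tri0: "det (tri 0 d u l) = 1" by (rule det_dim_zero[OF tri_carrier])
lemma tri1: "tri 1 d u l $$ (0,0) = d 0" by (simp add: tri_def)
lemma tri1d: "det (mat_delete (tri 1 d u l) 0 0) = 1"
  using det_dim_zero mat_delete_carrier[OF tri_carrier[of 1 d u l]] by simp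

lemma tri_delete_last: "mat_delete (tri (Suc n) d u l) n n = tri n d u l"
  by (rule eq_matI) (auto simp: mat_delete_def tri_def)

lemma det_tri: "det (tri n d u l) = Dn d (u * l) n"
proof (induction n rule: less_induct)
  case (less n)
  show ?case
  proof (cases n)
    case 0 thus ?thesis using tri0 by simp
  next
    case (Suc n1)
    show ?thesis
    proof (cases n1)
      case 0
      have "det (tri 1 d u l) = (\<Sum>j<1. tri 1 d u l $$ (0,j) * cofactor (tri 1 d u l) 0 j)"
        by (rule laplace_expansion_row[OF tri_carrier]) simp
      also have "\<dots> = tri 1 d u l $$ (0,0) * cofactor (tri 1 d u l) 0 0" by simp
      also have "\<dots> = d 0" unfolding tri1 cofactor_def tri1d by simp
      finally show ?thesis using Suc 0 by simp
    next
      case (Suc k)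
      have n: "n = Suc (Suc k)" using \<open>n = Suc n1\<close> Suc by simp
      define A where "A = tri (Suc (Suc k)) d u l"
      have Ac: "A \<in> carrier_mat (Suc (Suc k)) (Suc (Suc k))" unfolding A_def by (rule tri_carrier)
      have "det A = (\<Sum>j<Suc (Suc k). A $$ (Suc k, j) * cofactor A (Suc k) j)"
        by (rule laplace_expansion_row[OF Ac]) simp
      also have "\<dots> = (\<Sum>j<k. A $$ (Suc k, j) * cofactor A (Suc k) j)
          + A $$ (Suc k, k) * cofactor A (Suc k) k + A $$ (Suc k, Suc k) * cofactor A (Suc k) (Suc k)"
        by simp
      also have "(\<Sum>j<k. A $$ (Suc k, j) * cofactor A (Suc k) j) = 0"
        by (rule sum.neutral) (auto simp: A_def tri_def)
      also have "A $$ (Suc k, Suc k) = d (Suc k)" by (simp add: A_def tri_def)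
      also have "A $$ (Suc k, k) = l" by (simp add: A_def tri_def)
      also have "cofactor A (Suc k) (Suc k) = det (tri (Suc k) d u l)"
        unfolding cofactor_def A_def tri_delete_last by simp
      also have "cofactor A (Suc k) k = - (u * det (tri k d u l))"
      proof -
        define B where "B = mat_delete A (Suc k) k"
        have Bc: "B \<in> carrier_mat (Suc k) (Suc k)" unfolding B_def using mat_delete_carrier[OF Ac] by simp
        have Bij: "B $$ (i, j) = A $$ (i, if j < k then j else Suc j)" if "i < Suc k" "j < Suc k" for i j
          using that Ac by (simp add: B_def mat_delete_def)
        have "det B = (\<Sum>i<Suc k. B $$ (i, k) * cofactor B i k)"
          by (rule laplace_expansion_column[OF Bc]) simp
        also have "\<dots> = (\<Sum>i<k. B $$ (i, k) * cofactor B i k) + B $$ (k, k) * cofactor B k k" by simp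
        also have "(\<Sum>i<k. B $$ (i, k) * cofactor B i k) = 0"
          by (rule sum.neutral) (auto simp: Bij A_def tri_def)
        also have "B $$ (k, k) = u" by (simp add: Bij A_def tri_def)
        also have "mat_delete B k k = tri k d u l"
          by (rule eq_matI) (auto simp: mat_delete_def B_def A_def tri_def)
        hence "cofactor B k k = det (tri k d u l)" by (simp add: cofactor_def)
        finally have "det B = u * det (tri k d u l)" by simp
        thus ?thesis unfolding cofactor_def B_def[symmetric] by simp
      qed
      finally have "det A = l * (- (u * det (tri k d u l))) + d (Suc k) * det (tri (Suc k) d u l)" by simp
      moreover have "det (tri k d u l) = Dn d (u * l) k" using less n by simp
      moreover have "det (tri (Suc k) d u l) = Dn d (u * l) (Suc k)" using less n by simp
      ultimately show ?thesis unfolding n A_def[symmetric] by (simp add: algebra_simps)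
    qed
  qed
qed

lemma alex_tri:
  "alexander_poly r = det (tri (length r) (\<lambda>i. [:r ! i div 2:] * ([:0,1:] - 1)) [:0,1:] (-1))"
proof -
  let ?M = "seifert_M r" and ?n = "length r"
  have M: "?M $$ (i,j) = (if i = j then r ! i div 2 else if j = i + 1 then 1 else 0)" if "i < ?n" "j < ?n" for i j
    using that by (simp add: seifert_M_def)
  have "mat ?n ?n (\<lambda>(i, j). [:0, ?M $$ (i, j):] - [:?M $$ (j, i):])
     = tri ?n (\<lambda>i. [:r ! i div 2:] * ([:0,1:] - 1)) [:0,1:] (-1)"
  proof (rule eq_matI)
    fix i j assume ij: "i < dim_row (tri ?n (\<lambda>i. [:r ! i div 2:] * ([:0,1:] - 1)) [:0,1:] (-1))"
      "j < dim_col (tri ?n (\<lambda>i. [:r ! i div 2:] * ([:0,1:] - 1)) [:0,1:] (-1))"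
    hence ij': "i < ?n" "j < ?n" by (auto simp: tri_def)
    show "mat ?n ?n (\<lambda>(i, j). [:0, ?M $$ (i, j):] - [:?M $$ (j, i):]) $$ (i, j)
      = tri ?n (\<lambda>i. [:r ! i div 2:] * ([:0,1:] - 1)) [:0,1:] (-1) $$ (i, j)"
      using ij' by (auto simp: M tri_def algebra_simps one_pCons)
  qed (auto simp: tri_def)
  thus ?thesis unfolding alexander_poly_def by simp
qed

lemma Dn_map:
  "map_poly (of_int :: int \<Rightarrow> complex) (Dn d ul k) = Dn (\<lambda>i. map_poly of_int (d i)) (map_poly of_int ul) k"
  by (induction d ul k rule: Dn.induct) (simp_all add: hom_distribs)

lemma Dn_poly: "poly (Dn d ul k) z = Dn (\<lambda>i. poly (d i) z) (poly ul z) k"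
  by (induction d ul k rule: Dn.induct) simp_all

lemma alex_eval:
  "poly (map_poly complex_of_int (alexander_poly r)) z
     = Dn (\<lambda>i. of_int (r ! i div 2) * (z - 1)) (- z) (length r)"
  unfolding alex_tri det_tri Dn_map Dn_poly by (simp add: hom_distribs)

lemma Dn_FG:
  fixes t :: complex
  assumes t: "t \<noteq> 0"
  defines "y \<equiv> (t - 1)^2 / t"
  shows "Dn (\<lambda>i. c i * (t - 1)) (- t) (2 * j) = t^j * fst (FG (\<lambda>j. c (2*j)) (\<lambda>j. c (2*j+1)) y (1,0) j)
    \<and> Dn (\<lambda>i. c i * (t - 1)) (- t) (Suc (2 * j)) = t^j * (t - 1) * snd (FG (\<lambda>j. c (2*j)) (\<lambda>j. c (2*j+1)) y (1,0) (Suc j))"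
proof (induction j)
  case 0 thus ?case by (simp add: stp_def)
next
  case (Suc j)
  let ?D = "Dn (\<lambda>i. c i * (t - 1)) (- t)"
  let ?X = "FG (\<lambda>j. c (2*j)) (\<lambda>j. c (2*j+1)) y (1,0)"
  have yt: "y * t = (t - 1)^2" using t by (simp add: y_def)
  have e1: "?D (2 * Suc j) = c (Suc (2*j)) * (t - 1) * ?D (Suc (2*j)) + t * ?D (2*j)"
    by (simp add: numeral_2_eq_2)
  have A: "?D (2 * Suc j) = t ^ Suc j * fst (?X (Suc j))"
  proof -
    have "?D (2 * Suc j) = c (Suc (2*j)) * (t - 1) * (t^j * (t - 1) * snd (?X (Suc j))) + t * (t^j * fst (?X j))"
      using e1 Suc by simp
    also have "\<dots> = t^j * (c (2*j+1) * (y * t) * snd (?X (Suc j)) + t * fst (?X j))"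
      unfolding yt by (simp add: power2_eq_square algebra_simps)
    also have "\<dots> = t ^ Suc j * fst (?X (Suc j))"
      by (simp add: stp_def algebra_simps)
    finally show ?thesis .
  qed
  have e2: "?D (Suc (2 * Suc j)) = c (2 * Suc j) * (t - 1) * ?D (2 * Suc j) + t * ?D (Suc (2*j))"
    by (simp add: numeral_2_eq_2)
  have B: "?D (Suc (2 * Suc j)) = t ^ Suc j * (t - 1) * snd (?X (Suc (Suc j)))"
  proof -
    have "?D (Suc (2 * Suc j)) = c (2 * Suc j) * (t - 1) * (t ^ Suc j * fst (?X (Suc j))) + t * (t^j * (t - 1) * snd (?X (Suc j)))"
      using e2 A Suc by simp
    also have "\<dots> = t ^ Suc j * (t - 1) * snd (?X (Suc (Suc j)))"
      by (simp add: stp_def algebra_simps)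
    finally show ?thesis .
  qed
  show ?case using A B by simp
qed

lemma FG_of_real:
  "FG (\<lambda>j. complex_of_real (al j)) (\<lambda>j. of_real (be j)) (of_real y) (1,0) k
    = (of_real (fst (FG al be y (1,0) k)), of_real (snd (FG al be y (1,0) k)))"
  by (induction k) (simp_all add: stp_def)


lemma count_roots:
  fixes P :: "complex poly"
  assumes P0: "P \<noteq> 0" and deg: "degree P \<le> 2*m + 2*p"
    and TR: "TR \<subseteq> {z. poly P z = 0 \<and> z \<in> \<real>}" "finite TR" "card TR = 2*p"
    and TC: "TC \<subseteq> {z. poly P z = 0 \<and> z \<notin> \<real>}" "finite TC" "card TC = 2*m"
    and TCu: "\<forall>z\<in>TC. cmod z = 1"
  shows "(\<forall>z. poly P z = 0 \<longrightarrow> z \<in> \<real> \<or> cmod z = 1)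
    \<and> (\<Sum>z\<in>{z. poly P z = 0 \<and> z \<in> \<real>}. order z P) = 2 * p
    \<and> (\<Sum>z\<in>{z. poly P z = 0 \<and> z \<notin> \<real>}. order z P) = 2 * m"
proof -
  define S where "S = {z. poly P z = 0}"
  define SR where "SR = {z. poly P z = 0 \<and> z \<in> \<real>}"
  define SC where "SC = {z. poly P z = 0 \<and> z \<notin> \<real>}"
  have finS: "finite S" unfolding S_def using poly_roots_finite[OF P0] .
  have finR: "finite SR" "finite SC" using finS by (auto simp: S_def SR_def SC_def intro: finite_subset)
  have "(\<Sum>z\<in>S. order z P) = size (proots P)"
    using P0 by (simp add: size_multiset_overloaded_eq S_def)
  also have "\<dots> \<le> 2*m + 2*p" using size_proots_le[of P] deg by linarith
  finally have tot: "(\<Sum>z\<in>S. order z P) \<le> 2*m + 2*p" .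
  have Ssplit: "S = SR \<union> SC" "SR \<inter> SC = {}" by (auto simp: S_def SR_def SC_def)
  have sumsplit: "(\<Sum>z\<in>S. order z P) = (\<Sum>z\<in>SR. order z P) + (\<Sum>z\<in>SC. order z P)"
    unfolding Ssplit(1) by (rule sum.union_disjoint) (use finR Ssplit(2) in auto)
  have ord1: "order z P \<ge> 1" if "poly P z = 0" for z
    using that P0 order_root[of P z] by auto
  have lowsum: "(\<Sum>z\<in>A. order z P) \<ge> card A" if "finite A" "A \<subseteq> S" for A
  proof -
    have "(\<Sum>z\<in>A. order z P) \<ge> (\<Sum>z\<in>A. 1)"
      by (rule sum_mono) (use that ord1 in \<open>auto simp: S_def\<close>)
    thus ?thesis by simp
  qed
  have "(\<Sum>z\<in>SR. order z P) \<ge> (\<Sum>z\<in>TR. order z P)"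
    by (rule sum_mono2) (use finR TR in \<open>auto simp: SR_def\<close>)
  moreover have "(\<Sum>z\<in>TR. order z P) \<ge> 2*p" using lowsum[of TR] TR by (auto simp: S_def)
  ultimately have R1: "(\<Sum>z\<in>SR. order z P) \<ge> 2*p" by linarith
  have "(\<Sum>z\<in>SC. order z P) \<ge> (\<Sum>z\<in>TC. order z P)"
    by (rule sum_mono2) (use finR TC in \<open>auto simp: SC_def\<close>)
  moreover have "(\<Sum>z\<in>TC. order z P) \<ge> 2*m" using lowsum[of TC] TC by (auto simp: S_def)
  ultimately have C1: "(\<Sum>z\<in>SC. order z P) \<ge> 2*m" by linarith
  have eqR: "(\<Sum>z\<in>SR. order z P) = 2*p" and eqC: "(\<Sum>z\<in>SC. order z P) = 2*m"
    using tot sumsplit R1 C1 by linarith+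
  have allroots: "z \<in> \<real> \<or> cmod z = 1" if z: "poly P z = 0" for z
  proof (rule ccontr)
    assume nz: "\<not> (z \<in> \<real> \<or> cmod z = 1)"
    hence zn: "z \<notin> TC" using TCu by auto
    have "(\<Sum>z\<in>SC. order z P) \<ge> (\<Sum>z\<in>insert z TC. order z P)"
      by (rule sum_mono2) (use finR TC z nz in \<open>auto simp: SC_def\<close>)
    moreover have "(\<Sum>z\<in>insert z TC. order z P) = order z P + (\<Sum>z\<in>TC. order z P)"
      using TC zn by simp
    moreover have "(\<Sum>z\<in>TC. order z P) \<ge> 2*m" using lowsum[of TC] TC by (auto simp: S_def)
    ultimately show False using eqC ord1[OF z] by linarith
  qed
  show ?thesis using allroots eqR eqC by (simp add: SR_def SC_def)
qed

definition tR :: "real \<Rightarrow> real \<Rightarrow> complex" where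
  "tR s y = complex_of_real ((y + 2 + s * sqrt (y^2 + 4*y)) / 2)"

definition tC :: "real \<Rightarrow> real \<Rightarrow> complex" where
  "tC s y = Complex ((y + 2) / 2) (s * sqrt (- (y^2 + 4*y)) / 2)"

lemma quadR:
  assumes "y^2 + 4*y \<ge> 0" "s^2 = 1"
  shows "(tR s y)^2 - (of_real y + 2) * tR s y + 1 = 0"
proof -
  have q: "(sqrt (y^2 + 4*y))^2 = y^2 + 4*y" using assms by simp
  have "((y + 2 + s * sqrt (y^2 + 4*y)) / 2)^2 - (y + 2) * ((y + 2 + s * sqrt (y^2 + 4*y)) / 2) + 1
     = (s^2 * (sqrt (y^2 + 4*y))^2 - (y+2)^2 + 4) / 4"
    by (simp add: power2_eq_square field_simps)
  also have "\<dots> = 0" unfolding q assms(2) by (simp add: power2_eq_square algebra_simps)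
  finally have "((y + 2 + s * sqrt (y^2 + 4*y)) / 2)^2 - (y + 2) * ((y + 2 + s * sqrt (y^2 + 4*y)) / 2) + 1 = 0" .
  hence "complex_of_real (((y + 2 + s * sqrt (y^2 + 4*y)) / 2)^2 - (y + 2) * ((y + 2 + s * sqrt (y^2 + 4*y)) / 2) + 1) = 0"
    by simp
  thus ?thesis unfolding tR_def by simp
qed

lemma quadC:
  assumes "y^2 + 4*y \<le> 0" "s^2 = 1"
  shows "(tC s y)^2 - (of_real y + 2) * tC s y + 1 = 0"
proof -
  have q: "(sqrt (- (y^2 + 4*y)))^2 = - (y^2 + 4*y)" using assms by simp
  show ?thesis
  proof (rule complex_eqI)
    show "Re ((tC s y)^2 - (of_real y + 2) * tC s y + 1) = Re 0"
    proof -
      have "Re ((tC s y)^2 - (of_real y + 2) * tC s y + 1)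
          = ((y+2)/2)^2 - (s * sqrt (- (y^2 + 4*y)) / 2)^2 - (y+2) * ((y+2)/2) + 1"
        by (simp add: tC_def power2_eq_square)
      also have "\<dots> = ((y+2)^2 - s^2 * (sqrt (- (y^2 + 4*y)))^2 - 2 * (y+2)^2 + 4) / 4"
        by (simp add: power2_eq_square field_simps)
      also have "\<dots> = 0" unfolding q assms(2) by (simp add: power2_eq_square algebra_simps)
      finally show ?thesis by simp
    qed
    show "Im ((tC s y)^2 - (of_real y + 2) * tC s y + 1) = Im 0"
      by (simp add: tC_def power2_eq_square algebra_simps)
  qed
qed

lemma quad_inv:
  fixes t :: complex
  assumes "t^2 - (of_real y + 2) * t + 1 = 0"
  shows "t \<noteq> 0 \<and> (t - 1)^2 / t = of_real y"
proof -
  have t0: "t \<noteq> 0" using assms by auto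
  have "(t - 1)^2 = of_real y * t" using assms by (simp add: power2_eq_square algebra_simps)
  thus ?thesis using t0 by simp
qed

lemma quad_recover:
  fixes t :: complex
  assumes "t^2 - (of_real y + 2) * t + 1 = 0" "t^2 - (of_real y' + 2) * t + 1 = 0"
  shows "y = y'"
proof -
  have "(t - 1)^2 / t = of_real y" "(t - 1)^2 / t = of_real y'" using quad_inv assms by blast+
  thus ?thesis by simp
qed

lemma tC_unit: "y^2 + 4*y \<le> 0 \<Longrightarrow> s^2 = 1 \<Longrightarrow> cmod (tC s y) = 1"
proof -
  assume a: "y^2 + 4*y \<le> 0" "s^2 = 1"
  have q: "(sqrt (- (y^2 + 4*y)))^2 = - (y^2 + 4*y)" using a by simp
  have "(cmod (tC s y))^2 = ((y+2)/2)^2 + (s * sqrt (- (y^2 + 4*y)) / 2)^2"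
    by (simp add: tC_def cmod_def)
  also have "\<dots> = ((y+2)^2 + s^2 * (sqrt (- (y^2 + 4*y)))^2) / 4" by (simp add: power_divide power_mult_distrib)
  also have "\<dots> = 1" unfolding q a(2) by (simp add: power2_eq_square algebra_simps)
  finally have "(cmod (tC s y))^2 = 1" .
  thus ?thesis using norm_ge_zero[of "tC s y"] by (auto simp: power2_eq_1_iff)
qed

lemma tC_nonreal: "y^2 + 4*y < 0 \<Longrightarrow> s \<noteq> 0 \<Longrightarrow> tC s y \<notin> \<real>"
  by (auto simp: tC_def complex_is_Real_iff)


lemma strict_inj:
  fixes u :: "nat \<Rightarrow> real"
  assumes "\<forall>i. Suc i < n \<longrightarrow> u i < u (Suc i)"
  shows "inj_on u {..<n}"
proof (rule inj_onI)
  fix i j assume ij: "i \<in> {..<n}" "j \<in> {..<n}" "u i = u j"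
  have m: "\<forall>i j. i < j \<longrightarrow> j < n \<longrightarrow> u i < u j" using mono_inj[OF assms] .
  show "i = j"
  proof (rule ccontr)
    assume "i \<noteq> j"
    hence "i < j \<or> j < i" by auto
    thus False using m ij by fastforce
  qed
qed

lemma card_two_images:
  fixes f g :: "nat \<Rightarrow> complex"
  assumes "inj_on f {..<n}" "inj_on g {..<n}" "\<forall>i<n. \<forall>j<n. f i \<noteq> g j"
  shows "card (f ` {..<n} \<union> g ` {..<n}) = 2 * n"
proof -
  have "card (f ` {..<n} \<union> g ` {..<n}) = card (f ` {..<n}) + card (g ` {..<n})"
    by (rule card_Un_disjoint) (use assms(3) in auto)
  thus ?thesis using card_image[OF assms(1)] card_image[OF assms(2)] by simp
qed

theorem theorem13p1:
  fixes m p :: nat and a b r :: "int list"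
  assumes "m \<ge> 1" and "p \<ge> 1"
    and "length a = 2 * m" and "\<forall>x\<in>set a. x > 0"
    and "length b = 2 * p" and "\<forall>x\<in>set b. x > 0"
    and "r = map (\<lambda>x. 2 * x) a @ map (\<lambda>i. (-1) ^ i * (2 * b ! i)) [0..<2 * p]
       \<or> r = map (\<lambda>i. (-1) ^ i * (2 * b ! i)) [0..<2 * p] @ map (\<lambda>x. 2 * x) a"
  shows "map_poly complex_of_int (alexander_poly r) \<noteq> 0
    \<and> (\<forall>z. poly (map_poly complex_of_int (alexander_poly r)) z = 0
           \<longrightarrow> z \<in> \<real> \<or> cmod z = 1)
    \<and> (\<Sum>z\<in>{z. poly (map_poly complex_of_int (alexander_poly r)) z = 0 \<and> z \<in> \<real>}.
         order z (map_poly complex_of_int (alexander_poly r))) = 2 * p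
    \<and> (\<Sum>z\<in>{z. poly (map_poly complex_of_int (alexander_poly r)) z = 0 \<and> z \<notin> \<real>}.
         order z (map_poly complex_of_int (alexander_poly r))) = 2 * m"
proof -
  define N where "N = m + p"
  define e where "e = (\<lambda>i. r ! i div 2)"
  define al where "al = (\<lambda>j. real_of_int (e (2*j)))"
  define be where "be = (\<lambda>j. real_of_int (e (2*j+1)))"
  have lenr: "length r = 2 * N" using assms(3,5,7) by (auto simp: N_def)
  have pa: "real_of_int (a ! i) \<ge> 1" if "i < 2*m" for i
  proof -
    have "a ! i \<in> set a" using that assms(3) by simp
    hence "a ! i > 0" using assms(4) by blast
    thus ?thesis by simp
  qed
  have pb: "real_of_int (b ! i) \<ge> 1" if "i < 2*p" for i
  proof -
    have "b ! i \<in> set b" using that assms(5) by simp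
    hence "b ! i > 0" using assms(6) by blast
    thus ?thesis by simp
  qed
  have div2: "((-1)^k * (2 * x)) div 2 = (-1)^k * (x::int)" for k x
  proof -
    have "(-1)^k * (2 * x) = 2 * ((-1)^k * x)" by (simp add: algebra_simps)
    thus ?thesis by simp
  qed
  have pw1: "((-1::int)^(2*k)) = 1" for k by simp
  have pw2: "((-1::int)^(Suc (2*k))) = -1" for k by simp
  have roots: "(\<exists>w. (\<forall>i<m. 0 < w i \<and> w i < 4 \<and> fst (FG al be (- w i) (1,0) N) = 0) \<and> (\<forall>i. Suc i < m \<longrightarrow> w i < w (Suc i)))
             \<and> (\<exists>u. (\<forall>i<p. 0 < u i \<and> fst (FG al be (u i) (1,0) N) = 0) \<and> (\<forall>i. Suc i < p \<longrightarrow> u i < u (Suc i)))"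
    using assms(7)
  proof
    assume r1: "r = map (\<lambda>x. 2 * x) a @ map (\<lambda>i. (-1) ^ i * (2 * b ! i)) [0..<2 * p]"
    have e1: "e i = a ! i" if "i < 2*m" for i
      using that assms(3) by (simp add: e_def r1 nth_append)
    have e2: "e (2*m + i) = (-1)^i * b ! i" if "i < 2*p" for i
      using that assms(3) by (simp add: e_def r1 nth_append div2)
    have A: "\<forall>j<m. al j \<ge> 1 \<and> be j \<ge> 1"
    proof (intro allI impI conjI)
      fix j assume j: "j < m"
      show "al j \<ge> 1" using pa[of "2*j"] e1[of "2*j"] j by (simp add: al_def)
      show "be j \<ge> 1" using pa[of "2*j+1"] e1[of "2*j+1"] j by (simp add: be_def)
    qed
    have B: "\<forall>j. m \<le> j \<and> j < m + p \<longrightarrow> al j \<ge> 1 \<and> be j \<le> -1"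
    proof (intro allI impI conjI)
      fix j assume j: "m \<le> j \<and> j < m + p"
      then obtain k where k: "j = m + k" "k < p" by (metis add_less_cancel_left le_Suc_ex)
      have "e (2*j) = b ! (2*k)" using e2[of "2*k"] k by (simp add: algebra_simps pw1)
      thus "al j \<ge> 1" using pb[of "2*k"] k by (simp add: al_def)
      have "e (2*j+1) = - (b ! (2*k+1))" using e2[of "2*k+1"] k by (simp add: algebra_simps)
      thus "be j \<le> -1" using pb[of "2*k+1"] k by (simp add: be_def)
    qed
    show ?thesis using claimA1[OF assms(1,2) A B] claimB1[OF assms(1,2) A B] by (simp add: N_def)
  next
    assume r2: "r = map (\<lambda>i. (-1) ^ i * (2 * b ! i)) [0..<2 * p] @ map (\<lambda>x. 2 * x) a"
    have e1: "e i = (-1)^i * b ! i" if "i < 2*p" for i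
      using that by (simp add: e_def r2 nth_append div2)
    have e2: "e (2*p + i) = a ! i" if "i < 2*m" for i
      using that assms(3) by (simp add: e_def r2 nth_append)
    have B: "\<forall>j<p. al j \<ge> 1 \<and> be j \<le> -1"
    proof (intro allI impI conjI)
      fix j assume j: "j < p"
      have "e (2*j) = b ! (2*j)" using e1[of "2*j"] j by (simp add: pw1)
      thus "al j \<ge> 1" using pb[of "2*j"] j by (simp add: al_def)
      have "e (2*j+1) = - (b ! (2*j+1))" using e1[of "2*j+1"] j by simp
      thus "be j \<le> -1" using pb[of "2*j+1"] j by (simp add: be_def)
    qed
    have A: "\<forall>j. p \<le> j \<and> j < p + m \<longrightarrow> al j \<ge> 1 \<and> be j \<ge> 1"
    proof (intro allI impI conjI)
      fix j assume j: "p \<le> j \<and> j < p + m"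
      then obtain k where k: "j = p + k" "k < m" by (metis add_less_cancel_left le_Suc_ex)
      have "e (2*j) = a ! (2*k)" using e2[of "2*k"] k by (simp add: algebra_simps)
      thus "al j \<ge> 1" using pa[of "2*k"] k by (simp add: al_def)
      have "e (2*j+1) = a ! (2*k+1)" using e2[of "2*k+1"] k by (simp add: algebra_simps)
      thus "be j \<ge> 1" using pa[of "2*k+1"] k by (simp add: be_def)
    qed
    show ?thesis using claimA2[OF assms(1,2) B A] claimB2[OF assms(1,2) B A] by (simp add: N_def add.commute)
  qed
  define P where "P = map_poly complex_of_int (alexander_poly r)"
  have Peval: "poly P t = t^N * complex_of_real (fst (FG al be y (1,0) N))"
    if q: "t^2 - (of_real y + 2) * t + 1 = 0" for t y
  proof -
    from quad_inv[OF q] have t0: "t \<noteq> 0" and ty: "(t-1)^2/t = of_real y" by auto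
    have "poly P t = Dn (\<lambda>i. complex_of_int (e i) * (t - 1)) (- t) (2*N)"
      unfolding P_def alex_eval lenr e_def ..
    also have "\<dots> = t^N * fst (FG (\<lambda>j. complex_of_int (e (2*j))) (\<lambda>j. complex_of_int (e (2*j+1))) ((t-1)^2/t) (1,0) N)"
      using Dn_FG[OF t0, of "\<lambda>i. complex_of_int (e i)" N] by simp
    also have "(\<lambda>j. complex_of_int (e (2*j))) = (\<lambda>j. complex_of_real (al j))" by (simp add: al_def fun_eq_iff)
    also have "(\<lambda>j. complex_of_int (e (2*j+1))) = (\<lambda>j. complex_of_real (be j))" by (simp add: be_def fun_eq_iff)
    also note ty
    finally show ?thesis by (simp add: FG_of_real)
  qed
  have rootP: "poly P t = 0" if "t^2 - (of_real y + 2) * t + 1 = 0" "fst (FG al be y (1,0) N) = 0" for t y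
    using Peval[OF that(1)] that(2) by simp
  have P1: "poly P 1 = 1"
  proof -
    have "(1::complex)^2 - (of_real 0 + 2) * 1 + 1 = 0" by simp
    from Peval[OF this] show ?thesis using FG_zero[of al be N] by simp
  qed
  hence P0: "P \<noteq> 0" by auto
  have degP: "degree P \<le> 2*m + 2*p"
  proof -
    have "degree P \<le> degree (alexander_poly r)" unfolding P_def by (rule degree_map_poly_le)
    also have "degree (alexander_poly r) \<le> 1 * length r"
      unfolding alexander_poly_def
      by (rule degree_det_le) (auto intro: order.trans[OF degree_diff_le])
    finally show ?thesis using lenr by (simp add: N_def)
  qed
  from roots obtain w where
    w1: "\<forall>i<m. 0 < w i \<and> w i < 4 \<and> fst (FG al be (- w i) (1,0) N) = 0"
    and w2: "\<forall>i. Suc i < m \<longrightarrow> w i < w (Suc i)" by blast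
  from roots obtain u where
    u1: "\<forall>i<p. 0 < u i \<and> fst (FG al be (u i) (1,0) N) = 0"
    and u2: "\<forall>i. Suc i < p \<longrightarrow> u i < u (Suc i)" by blast
  define TR where "TR = (\<lambda>i. tR 1 (u i)) ` {..<p} \<union> (\<lambda>i. tR (-1) (u i)) ` {..<p}"
  define TC where "TC = (\<lambda>i. tC 1 (- w i)) ` {..<m} \<union> (\<lambda>i. tC (-1) (- w i)) ` {..<m}"
  have udisc: "(u i)^2 + 4 * u i > 0" if "i < p" for i
  proof -
    have "u i > 0" using u1 that by simp
    thus ?thesis by (simp add: add_pos_pos)
  qed
  have wdisc: "(- w i)^2 + 4 * (- w i) < 0" if "i < m" for i
  proof -
    have "(- w i)^2 + 4 * (- w i) = w i * (w i - 4)" by (simp add: power2_eq_square algebra_simps)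
    moreover have "w i * (w i - 4) < 0" using w1 that by (simp add: mult_pos_neg)
    ultimately show ?thesis by simp
  qed
  have qR: "(tR s (u i))^2 - (of_real (u i) + 2) * tR s (u i) + 1 = 0" if "i < p" "s^2 = 1" for i s
    using quadR[of "u i" s] udisc[OF that(1)] that(2) by simp
  have qC: "(tC s (- w i))^2 - (of_real (- w i) + 2) * tC s (- w i) + 1 = 0" if "i < m" "s^2 = 1" for i s
    using quadC[of "- w i" s] wdisc[OF that(1)] that(2) by simp
  have injU: "inj_on u {..<p}" by (rule strict_inj[OF u2])
  have injW: "inj_on w {..<m}" by (rule strict_inj[OF w2])
  have recR: "u i = u j" if "i<p" "j<p" "s^2 = (1::real)" "s'^2 = (1::real)" "tR s (u i) = tR s' (u j)" for i j s s'
  proof -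
    have a: "(tR s (u i))^2 - (of_real (u i) + 2) * tR s (u i) + 1 = 0" using qR that by blast
    have "(tR s' (u j))^2 - (of_real (u j) + 2) * tR s' (u j) + 1 = 0" using qR that by blast
    hence b: "(tR s (u i))^2 - (of_real (u j) + 2) * tR s (u i) + 1 = 0" using that(5) by simp
    show ?thesis by (rule quad_recover[OF a b])
  qed
  have recC: "w i = w j" if "i<m" "j<m" "s^2 = (1::real)" "s'^2 = (1::real)" "tC s (- w i) = tC s' (- w j)" for i j s s'
  proof -
    have a: "(tC s (- w i))^2 - (of_real (- w i) + 2) * tC s (- w i) + 1 = 0" using qC that by blast
    have "(tC s' (- w j))^2 - (of_real (- w j) + 2) * tC s' (- w j) + 1 = 0" using qC that by blast
    hence b: "(tC s (- w i))^2 - (of_real (- w j) + 2) * tC s (- w i) + 1 = 0" using that(5) by simp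
    have "- w i = - w j" by (rule quad_recover[OF a b])
    thus ?thesis by simp
  qed
  have cardTR: "card TR = 2 * p"
    unfolding TR_def
  proof (rule card_two_images)
    show "inj_on (\<lambda>i. tR 1 (u i)) {..<p}"
    proof (rule inj_onI)
      fix i j assume ij: "i \<in> {..<p}" "j \<in> {..<p}" "tR 1 (u i) = tR 1 (u j)"
      have "u i = u j" by (rule recR[of i j 1 1]) (use ij in auto)
      thus "i = j" using injU ij by (simp add: inj_on_eq_iff)
    qed
    show "inj_on (\<lambda>i. tR (-1) (u i)) {..<p}"
    proof (rule inj_onI)
      fix i j assume ij: "i \<in> {..<p}" "j \<in> {..<p}" "tR (-1) (u i) = tR (-1) (u j)"
      have "u i = u j" by (rule recR[of i j "-1" "-1"]) (use ij in auto)
      thus "i = j" using injU ij by (simp add: inj_on_eq_iff)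
    qed
    show "\<forall>i<p. \<forall>j<p. tR 1 (u i) \<noteq> tR (-1) (u j)"
    proof (intro allI impI notI)
      fix i j assume ij: "i < p" "j < p" and eq: "tR 1 (u i) = tR (-1) (u j)"
      have "u i = u j" by (rule recR[of i j 1 "-1"]) (use ij eq in auto)
      hence "(u i + 2 + 1 * sqrt ((u i)^2 + 4 * u i)) / 2 = (u i + 2 + (-1) * sqrt ((u i)^2 + 4 * u i)) / 2"
        using eq unfolding tR_def of_real_eq_iff by simp
      hence "sqrt ((u i)^2 + 4 * u i) = 0" by simp
      thus False using udisc[OF ij(1)] by simp
    qed
  qed
  have cardTC: "card TC = 2 * m"
    unfolding TC_def
  proof (rule card_two_images)
    show "inj_on (\<lambda>i. tC 1 (- w i)) {..<m}"
    proof (rule inj_onI)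
      fix i j assume ij: "i \<in> {..<m}" "j \<in> {..<m}" "tC 1 (- w i) = tC 1 (- w j)"
      have "w i = w j" by (rule recC[of i j 1 1]) (use ij in auto)
      thus "i = j" using injW ij by (simp add: inj_on_eq_iff)
    qed
    show "inj_on (\<lambda>i. tC (-1) (- w i)) {..<m}"
    proof (rule inj_onI)
      fix i j assume ij: "i \<in> {..<m}" "j \<in> {..<m}" "tC (-1) (- w i) = tC (-1) (- w j)"
      have "w i = w j" by (rule recC[of i j "-1" "-1"]) (use ij in auto)
      thus "i = j" using injW ij by (simp add: inj_on_eq_iff)
    qed
    show "\<forall>i<m. \<forall>j<m. tC 1 (- w i) \<noteq> tC (-1) (- w j)"
    proof (intro allI impI notI)
      fix i j assume ij: "i < m" "j < m" and eq: "tC 1 (- w i) = tC (-1) (- w j)"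
      have "w i = w j" by (rule recC[of i j 1 "-1"]) (use ij eq in auto)
      hence "Im (tC 1 (- w i)) = Im (tC (-1) (- w i))" using eq by simp
      hence "1 * sqrt (- ((- w i)^2 + 4 * (- w i))) / 2 = (-1) * sqrt (- ((- w i)^2 + 4 * (- w i))) / 2"
        unfolding tC_def by (simp only: complex.sel)
      hence "sqrt (- ((- w i)^2 + 4 * (- w i))) = 0" by simp
      thus False using wdisc[OF ij(1)] by simp
    qed
  qed
  have rR: "poly P (tR s (u i)) = 0 \<and> tR s (u i) \<in> \<real>" if "i < p" "s^2 = (1::real)" for i s
  proof
    show "poly P (tR s (u i)) = 0" using rootP[OF qR[OF that]] u1 that(1) by simp
    show "tR s (u i) \<in> \<real>" by (simp add: tR_def)
  qed
  have rC: "poly P (tC s (- w i)) = 0 \<and> tC s (- w i) \<notin> \<real> \<and> cmod (tC s (- w i)) = 1" if "i < m" "s^2 = (1::real)" for i s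
  proof (intro conjI)
    show "poly P (tC s (- w i)) = 0" using rootP[OF qC[OF that]] w1 that(1) by simp
    have "s \<noteq> 0" using that(2) by auto
    thus "tC s (- w i) \<notin> \<real>" using tC_nonreal[OF wdisc[OF that(1)]] by auto
    show "cmod (tC s (- w i)) = 1" using tC_unit[of "- w i" s] wdisc[OF that(1)] that(2) by simp
  qed
  have rR1: "\<forall>i<p. poly P (tR 1 (u i)) = 0 \<and> tR 1 (u i) \<in> \<real>" using rR[of _ 1] by simp
  have rR2: "\<forall>i<p. poly P (tR (-1) (u i)) = 0 \<and> tR (-1) (u i) \<in> \<real>" using rR[of _ "-1"] by simp
  have rC1: "\<forall>i<m. poly P (tC 1 (- w i)) = 0 \<and> tC 1 (- w i) \<notin> \<real> \<and> cmod (tC 1 (- w i)) = 1" using rC[of _ 1] by simp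
  have rC2: "\<forall>i<m. poly P (tC (-1) (- w i)) = 0 \<and> tC (-1) (- w i) \<notin> \<real> \<and> cmod (tC (-1) (- w i)) = 1" using rC[of _ "-1"] by simp
  have sTR: "TR \<subseteq> {z. poly P z = 0 \<and> z \<in> \<real>}" unfolding TR_def using rR1 rR2 by auto
  have sTC: "TC \<subseteq> {z. poly P z = 0 \<and> z \<notin> \<real>}" "\<forall>z\<in>TC. cmod z = 1"
    unfolding TC_def using rC1 rC2 by auto
  have finTR: "finite TR" "finite TC" unfolding TR_def TC_def by auto
  have "(\<forall>z. poly P z = 0 \<longrightarrow> z \<in> \<real> \<or> cmod z = 1)
    \<and> (\<Sum>z\<in>{z. poly P z = 0 \<and> z \<in> \<real>}. order z P) = 2 * p
    \<and> (\<Sum>z\<in>{z. poly P z = 0 \<and> z \<notin> \<real>}. order z P) = 2 * m"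
    by (rule count_roots[OF P0 degP sTR finTR(1) cardTR sTC(1) finTR(2) cardTC sTC(2)])
  thus ?thesis using P0 unfolding P_def by blast
qed

end
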